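(* For every ordinal $\alpha\in\{1,2,3,\dots\}\cup\{\omega\}\cup\{\omega+m\mid m=1,2,\dots\}\cup\{2\omega\}$, the $\alpha$-th hypercenter of $U_3$ is $$Z_\alpha(U_3)=\{(x_1+f_1(x_2,x_3),\,x_2,\,x_3)\mid f_1\in S_\alpha\}.$$
   Context: $K$ is a field of characteristic zero, $A_3=K\langle x_1,x_2,x_3\rangle$ the free associative $K$-algebra with unity. $U_3$ is the group of unitriangular automorphisms of $A_3$: all automorphisms $(x_1+f_1,\,x_2+f_2,\,x_3+f_3)$ (meaning $x_i\mapsto x_i+f_i$) with $f_1\in K\langle x_2,x_3\rangle$, $f_2\in K\langle x_3\rangle$, $f_3\in K$. Let $V$ be the group of automorphisms $\varphi=(x_2+g(x_3),\,x_3+h)$ of $K\langle x_2,x_3\rangle$ with $g\in K\langle x_3\rangle$, $h\in K$, and for $f\in K\langle x_2,x_3\rangle$ write $f^\varphi=f(x_2+g(x_3),x_3+h)$. Define subsets of $K\langle x_2,x_3\rangle$: $S_1=S=\{f\mid f^\varphi=f\text{ for all }\varphi\in V\}$; $S_{m+1}=\{f\mid f^\varphi-f\in S_m\text{ for all }\varphi\in V\}$ for $m\ge1$; $S_\omega=\bigcup_{m\ge1}S_m$; $S_{\omega+1}=\{f\mid f^\varphi-f\in S_\omega\ \forall\varphi\in V\}$; $S_{\omega+m+1}=\{f\mid f^\varphi-f\in S_{\omega+m}\ \forall\varphi\in V\}$ for $m\ge1$; $S_{2\omega}=\bigcup_{m\ge1}S_{\omega+m}$. Upper central series of a group $G$: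 $Z_0=1$; for successor ordinals $Z_k=\{g\in G\mid [g,h]\in Z_{k-1}\ \forall h\in G\}$; for limit ordinals $Z_\alpha=\bigcup_{\beta<\alpha}Z_\beta$; $\omega$ is the first infinite ordinal. *)

theory Defs
  imports "HOL-Algebra.Group"
begin

text \<open>A noncommutative polynomial is a function from words (lists of variable indices)
  to coefficients; variable x_i is the letter i.  Only finitely supported functions are
  polynomials (see in_vars).\<close>

type_synonym 'k ncpoly = "nat list \<Rightarrow> 'k"

definition pzero :: "'k::field ncpoly" where "pzero = (\<lambda>w. 0)"
definition pone :: "'k::field ncpoly" where "pone = (\<lambda>w. if w = [] then 1 else 0)"
definition pconst :: "'k::field \<Rightarrow> 'k ncpoly" where "pconst c = (\<lambda>w. if w = [] then c else 0)"
definition pvar :: "nat \<Rightarrow> 'k::field ncpoly" where "pvar i = (\<lambda>w. if w = [i] then 1 else 0)"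
definition padd :: "'k::field ncpoly \<Rightarrow> 'k ncpoly \<Rightarrow> 'k ncpoly" where
  "padd p q = (\<lambda>w. p w + q w)"
definition psub :: "'k::field ncpoly \<Rightarrow> 'k ncpoly \<Rightarrow> 'k ncpoly" where
  "psub p q = (\<lambda>w. p w - q w)"
definition pmul :: "'k::field ncpoly \<Rightarrow> 'k ncpoly \<Rightarrow> 'k ncpoly" where
  "pmul p q = (\<lambda>w. \<Sum>i\<in>{0..length w}. p (take i w) * q (drop i w))"

definition in_vars :: "nat set \<Rightarrow> 'k::field ncpoly \<Rightarrow> bool" where
  "in_vars V p \<longleftrightarrow> finite {w. p w \<noteq> 0} \<and> (\<forall>w. p w \<noteq> 0 \<longrightarrow> set w \<subseteq> V)"

definition eval_word :: "(nat \<Rightarrow> 'k::field ncpoly) \<Rightarrow> nat list \<Rightarrow> 'k ncpoly" where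
  "eval_word \<sigma> w = foldr (\<lambda>i acc. pmul (\<sigma> i) acc) w pone"

definition subst :: "(nat \<Rightarrow> 'k::field ncpoly) \<Rightarrow> 'k ncpoly \<Rightarrow> 'k ncpoly" where
  "subst \<sigma> p = (\<lambda>v. \<Sum>w\<in>{w. p w \<noteq> 0}. p w * eval_word \<sigma> w v)"

text \<open>(f1,f2,f3) represents the automorphism x_1 \<mapsto> x_1+f1, x_2 \<mapsto> x_2+f2, x_3 \<mapsto> x_3+f3.\<close>
definition tri_subst :: "'k::field ncpoly \<times> 'k ncpoly \<times> 'k ncpoly \<Rightarrow> nat \<Rightarrow> 'k ncpoly" where
  "tri_subst f i = (case f of (f1, f2, f3) \<Rightarrow>
      if i = 1 then padd (pvar 1) f1 else if i = 2 then padd (pvar 2) f2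
      else if i = 3 then padd (pvar 3) f3 else pvar i)"

text \<open>Group product = composition of automorphisms (phi o psi)(x_i) = phi(psi(x_i)).\<close>
definition U3_mult :: "'k::field ncpoly \<times> 'k ncpoly \<times> 'k ncpoly
    \<Rightarrow> 'k ncpoly \<times> 'k ncpoly \<times> 'k ncpoly \<Rightarrow> 'k ncpoly \<times> 'k ncpoly \<times> 'k ncpoly" where
  "U3_mult f g = (case f of (f1, f2, f3) \<Rightarrow> case g of (g1, g2, g3) \<Rightarrow>
      (padd f1 (subst (tri_subst f) g1), padd f2 (subst (tri_subst f) g2),
       padd f3 (subst (tri_subst f) g3)))"

definition U3 :: "('k::field ncpoly \<times> 'k ncpoly \<times> 'k ncpoly) monoid" where
  "U3 = \<lparr> carrier = {(f1, f2, f3). in_vars {2,3} f1 \<and> in_vars {3} f2 \<and> in_vars {} f3},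
          mult = U3_mult, one = (pzero, pzero, pzero) \<rparr>"

text \<open>Fin n = n, OmegaPlus m = omega + m (OmegaPlus 0 = omega), TwoOmega = 2 omega.\<close>
datatype ord_idx = Fin nat | OmegaPlus nat | TwoOmega

fun stage :: "('a set \<Rightarrow> 'a set) \<Rightarrow> 'a set \<Rightarrow> ord_idx \<Rightarrow> 'a set" where
  "stage F B (Fin n) = (F ^^ n) B"
| "stage F B (OmegaPlus m) = (F ^^ m) (\<Union>n. (F ^^ n) B)"
| "stage F B TwoOmega = (\<Union>m. (F ^^ m) (\<Union>n. (F ^^ n) B))"

definition commutator :: "('a, 'b) monoid_scheme \<Rightarrow> 'a \<Rightarrow> 'a \<Rightarrow> 'a" where
  "commutator G g h = inv\<^bsub>G\<^esub> g \<otimes>\<^bsub>G\<^esub> inv\<^bsub>G\<^esub> h \<otimes>\<^bsub>G\<^esub> g \<otimes>\<^bsub>G\<^esub> h"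

definition center_step :: "('a, 'b) monoid_scheme \<Rightarrow> 'a set \<Rightarrow> 'a set" where
  "center_step G Y = {g \<in> carrier G. \<forall>h \<in> carrier G. commutator G g h \<in> Y}"

definition hypercenter :: "('a, 'b) monoid_scheme \<Rightarrow> ord_idx \<Rightarrow> 'a set" where
  "hypercenter G \<alpha> = stage (center_step G) {\<one>\<^bsub>G\<^esub>} \<alpha>"

text \<open>V: automorphisms (x_2 + g(x_3), x_3 + h) of K<x_2,x_3>, g \<in> K<x_3>, h \<in> K.\<close>
definition Vset :: "('k::field ncpoly \<times> 'k ncpoly) set" where
  "Vset = {(g, h). in_vars {3} g \<and> in_vars {} h}"

definition V_subst :: "'k::field ncpoly \<times> 'k ncpoly \<Rightarrow> nat \<Rightarrow> 'k ncpoly" where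
  "V_subst \<phi> i = (case \<phi> of (g, h) \<Rightarrow>
      if i = 2 then padd (pvar 2) g else if i = 3 then padd (pvar 3) h else pvar i)"

text \<open>f^phi = f(x_2 + g(x_3), x_3 + h).\<close>
definition Vact :: "'k::field ncpoly \<Rightarrow> 'k ncpoly \<times> 'k ncpoly \<Rightarrow> 'k ncpoly" where
  "Vact f \<phi> = subst (V_subst \<phi>) f"

definition S_step :: "'k::field ncpoly set \<Rightarrow> 'k ncpoly set" where
  "S_step Y = {f. in_vars {2,3} f \<and> (\<forall>\<phi>\<in>Vset. psub (Vact f \<phi>) f \<in> Y)}"

definition S_idx :: "ord_idx \<Rightarrow> 'k::field ncpoly set" where
  "S_idx \<alpha> = stage S_step {pzero} \<alpha>"

end

theory Submission
  imports Defs "HOL-Computational_Algebra.Polynomial"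
begin


definition splits :: "nat list \<Rightarrow> (nat list \<times> nat list) set" where
  "splits w = {(u,v). u @ v = w}"

lemma splits_img: "splits w = (\<lambda>i. (take i w, drop i w)) ` {0..length w}"
proof -
  have "(u,v) \<in> (\<lambda>i. (take i w, drop i w)) ` {0..length w}" if "u @ v = w" for u v
    using that by (intro image_eqI[of _ _ "length u"]) auto
  then show ?thesis unfolding splits_def by auto
qed

lemma finite_splits[simp]: "finite (splits w)"
  unfolding splits_img by simp

lemma pmul_splits: "pmul p q w = (\<Sum>(u,v)\<in>splits w. p u * q v)"
proof -
  have inj: "inj_on (\<lambda>i. (take i w, drop i w)) {0..length w}"
    by (rule inj_onI) (metis append_take_drop_id length_take min_absorb2 atLeastAtMost_iff prod.inject)
  show ?thesis unfolding pmul_def splits_img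
    by (simp add: sum.reindex[OF inj])
qed

definition splits3 :: "nat list \<Rightarrow> (nat list \<times> nat list \<times> nat list) set" where
  "splits3 w = {(u,v,x). u @ v @ x = w}"

lemma finite_splits3: "finite (splits3 w)"
proof -
  have "splits3 w \<subseteq> (\<lambda>((a,x),(u,v)). (u,v,x)) ` (SIGMA ax:splits w. splits (fst ax))"
    unfolding splits3_def splits_def
    by (auto intro!: image_eqI[where x="((_ @ _, _), (_, _))"])
  moreover have "finite (SIGMA ax:splits w. splits (fst ax))" by auto
  ultimately show ?thesis by (meson finite_imageI finite_subset)
qed

lemma pmul_assoc: "pmul (pmul p q) r = pmul p (pmul q r)"
proof
  fix w
  have L: "pmul (pmul p q) r w = (\<Sum>(u,v,x)\<in>splits3 w. p u * q v * r x)"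
  proof -
    have "pmul (pmul p q) r w = (\<Sum>(a,x)\<in>splits w. (\<Sum>(u,v)\<in>splits a. p u * q v) * r x)"
      by (simp add: pmul_splits)
    also have "\<dots> = (\<Sum>(a,x)\<in>splits w. (\<Sum>(u,v)\<in>splits a. p u * q v * r x))"
      by (simp add: sum_distrib_right case_prod_unfold)
    also have "\<dots> = (\<Sum>ax\<in>splits w. (\<Sum>uv\<in>splits (fst ax). p (fst uv) * q (snd uv) * r (snd ax)))"
      by (simp add: case_prod_unfold)
    also have "\<dots> = (\<Sum>z\<in>(SIGMA ax:splits w. splits (fst ax)). p (fst (snd z)) * q (snd (snd z)) * r (snd (fst z)))"
      by (subst sum.Sigma) (auto simp: case_prod_unfold)
    also have "\<dots> = (\<Sum>(u,v,x)\<in>splits3 w. p u * q v * r x)"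
    proof (rule sum.reindex_bij_witness[where i="\<lambda>(u,v,x). ((u@v,x),(u,v))" and j="\<lambda>((a,x),(u,v)). (u,v,x)"])
    qed (auto simp: splits_def splits3_def)
    finally show ?thesis .
  qed
  have R: "pmul p (pmul q r) w = (\<Sum>(u,v,x)\<in>splits3 w. p u * q v * r x)"
  proof -
    have "pmul p (pmul q r) w = (\<Sum>(u,b)\<in>splits w. p u * (\<Sum>(v,x)\<in>splits b. q v * r x))"
      by (simp add: pmul_splits)
    also have "\<dots> = (\<Sum>(u,b)\<in>splits w. (\<Sum>(v,x)\<in>splits b. p u * q v * r x))"
      by (simp add: sum_distrib_left case_prod_unfold mult.assoc)
    also have "\<dots> = (\<Sum>ub\<in>splits w. (\<Sum>vx\<in>splits (snd ub). p (fst ub) * q (fst vx) * r (snd vx)))"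
      by (simp add: case_prod_unfold)
    also have "\<dots> = (\<Sum>z\<in>(SIGMA ub:splits w. splits (snd ub)). p (fst (fst z)) * q (fst (snd z)) * r (snd (snd z)))"
      by (subst sum.Sigma) (auto simp: case_prod_unfold)
    also have "\<dots> = (\<Sum>(u,v,x)\<in>splits3 w. p u * q v * r x)"
    proof (rule sum.reindex_bij_witness[where i="\<lambda>(u,v,x). ((u,v@x),(v,x))" and j="\<lambda>((u,b),(v,x)). (u,v,x)"])
    qed (auto simp: splits_def splits3_def)
    finally show ?thesis .
  qed
  show "pmul (pmul p q) r w = pmul p (pmul q r) w" using L R by simp
qed

lemma pmul_pone_left: "pmul pone p = p"
proof
  fix w
  have "pmul pone p w = (\<Sum>i\<in>{0..length w}. (if i = 0 then p w else 0))"
    unfolding pmul_def pone_def by (intro sum.cong) auto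
  then show "pmul pone p w = p w" by simp
qed

lemma pmul_pone_right: "pmul p pone = p"
proof
  fix w
  have "pmul p pone w = (\<Sum>i\<in>{0..length w}. (if i = length w then p w else 0))"
    unfolding pmul_def pone_def by (intro sum.cong) auto
  then show "pmul p pone w = p w" by simp
qed

lemma pmul_padd_left: "pmul (padd p q) r = padd (pmul p r) (pmul q r)"
  unfolding pmul_def padd_def by (auto simp: distrib_right sum.distrib)
lemma pmul_padd_right: "pmul r (padd p q) = padd (pmul r p) (pmul r q)"
  unfolding pmul_def padd_def by (auto simp: distrib_left sum.distrib)

typedef (overloaded) 'k nc = "UNIV :: (nat list \<Rightarrow> 'k::field) set" by auto
setup_lifting type_definition_nc

instantiation nc :: (field) ring_1
begin
lift_definition zero_nc :: "'a nc" is pzero .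
lift_definition one_nc :: "'a nc" is pone .
lift_definition plus_nc :: "'a nc \<Rightarrow> 'a nc \<Rightarrow> 'a nc" is padd .
lift_definition minus_nc :: "'a nc \<Rightarrow> 'a nc \<Rightarrow> 'a nc" is psub .
lift_definition uminus_nc :: "'a nc \<Rightarrow> 'a nc" is "\<lambda>p w. - p w" .
lift_definition times_nc :: "'a nc \<Rightarrow> 'a nc \<Rightarrow> 'a nc" is pmul .
instance
proof
  fix a b c :: "'a nc"
  show "a * b * c = a * (b * c)" by transfer (rule pmul_assoc)
  show "(a + b) * c = a * c + b * c" by transfer (rule pmul_padd_left)
  show "a * (b + c) = a * b + a * c" by transfer (rule pmul_padd_right)
  show "1 * a = a" by transfer (rule pmul_pone_left)
  show "a * 1 = a" by transfer (rule pmul_pone_right)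
  show "a + b + c = a + (b + c)" by transfer (auto simp: padd_def)
  show "a + b = b + a" by transfer (auto simp: padd_def)
  show "0 + a = a" by transfer (auto simp: padd_def pzero_def)
  show "- a + a = 0" by transfer (auto simp: padd_def pzero_def)
  show "a - b = a + - b" by transfer (auto simp: padd_def psub_def)
  show "(0::'a nc) \<noteq> 1" by transfer (auto simp: pzero_def pone_def fun_eq_iff)
qed
end


lemma Rep_zero: "Rep_nc 0 = pzero" by transfer simp
lemma Rep_one[simp]: "Rep_nc 1 = pone" by transfer simp
lemma Rep_plus: "Rep_nc (p + q) = padd (Rep_nc p) (Rep_nc q)" by transfer simp
lemma Rep_minus: "Rep_nc (p - q) = psub (Rep_nc p) (Rep_nc q)" by transfer simp
lemma Rep_uminus: "Rep_nc (- p) = (\<lambda>w. - Rep_nc p w)" by transfer simp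
lemma Rep_times: "Rep_nc (p * q) = pmul (Rep_nc p) (Rep_nc q)" by transfer simp

lemma Rep_plus_app[simp]: "Rep_nc (p + q) w = Rep_nc p w + Rep_nc q w" by (simp add: Rep_plus padd_def)
lemma Rep_minus_app[simp]: "Rep_nc (p - q) w = Rep_nc p w - Rep_nc q w" by (simp add: Rep_minus psub_def)
lemma Rep_uminus_app[simp]: "Rep_nc (- p) w = - Rep_nc p w" by (simp add: Rep_uminus)
lemma Rep_zero_app[simp]: "Rep_nc 0 w = 0" by (simp add: Rep_zero pzero_def)

lemma Rep_sum: "Rep_nc (sum f A) w = (\<Sum>x\<in>A. Rep_nc (f x) w)"
  by (induction A rule: infinite_finite_induct) auto

definition sc :: "'k::field \<Rightarrow> 'k nc" where "sc c = Abs_nc (pconst c)"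

lemma Rep_sc: "Rep_nc (sc c) = pconst c" unfolding sc_def by (simp add: Abs_nc_inverse)

lemma sc_mult_app[simp]: "Rep_nc (sc c * p) w = c * Rep_nc p w"
proof -
  have "Rep_nc (sc c * p) w = (\<Sum>i\<in>{0..length w}. (if i = 0 then c * Rep_nc p w else 0))"
    unfolding Rep_times Rep_sc pmul_def pconst_def by (intro sum.cong) auto
  then show ?thesis by simp
qed

lemma mult_sc_app[simp]: "Rep_nc (p * sc c) w = Rep_nc p w * c"
proof -
  have "Rep_nc (p * sc c) w = (\<Sum>i\<in>{0..length w}. (if i = length w then Rep_nc p w * c else 0))"
    unfolding Rep_times Rep_sc pmul_def pconst_def by (intro sum.cong) auto
  then show ?thesis by simp
qed

lemma nc_eqI: "(\<And>w. Rep_nc p w = Rep_nc q w) \<Longrightarrow> p = q"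
  by (metis Rep_nc_inject ext)

lemma sc_comm: "sc c * p = p * sc c"
  by (rule nc_eqI) (simp add: mult.commute)

lemma sc_0[simp]: "sc 0 = 0" by (rule nc_eqI) (simp add: Rep_sc pconst_def)
lemma sc_1[simp]: "sc 1 = 1" by (rule nc_eqI) (simp add: Rep_sc pconst_def pone_def)
lemma sc_add: "sc (a + b) = sc a + sc b" by (rule nc_eqI) (simp add: Rep_sc pconst_def)
lemma sc_diff: "sc (a - b) = sc a - sc b" by (rule nc_eqI) (simp add: Rep_sc pconst_def)
lemma sc_uminus: "sc (- a) = - sc a" by (rule nc_eqI) (simp add: Rep_sc pconst_def)
lemma sc_mult: "sc (a * b) = sc a * sc b" by (rule nc_eqI) (simp add: Rep_sc pconst_def)
lemma sc_inj: "sc a = sc b \<longleftrightarrow> a = b"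
  by (metis Rep_sc pconst_def)

lemma sc_mult_left: "sc a * (sc b * p) = sc (a * b) * p" by (simp add: sc_mult mult.assoc)

definition X :: "nat \<Rightarrow> 'k::field nc" where "X i = Abs_nc (pvar i)"
definition mon :: "nat list \<Rightarrow> 'k::field nc" where "mon w = Abs_nc (\<lambda>v. if v = w then 1 else 0)"

lemma Rep_X: "Rep_nc (X i) = pvar i" unfolding X_def by (simp add: Abs_nc_inverse)
lemma Rep_mon: "Rep_nc (mon w) v = (if v = w then 1 else 0)" unfolding mon_def by (simp add: Abs_nc_inverse)

lemma mon_Nil: "mon [] = 1"
  by (rule nc_eqI) (simp add: Rep_mon pone_def)

lemma mon_append: "mon (u @ v) = mon u * mon v"
proof (rule nc_eqI)
  fix w
  have "Rep_nc (mon u * mon v) w = (\<Sum>(a,b)\<in>splits w. (if a = u then 1 else 0) * (if b = v then 1 else 0))"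
    by (simp add: Rep_times pmul_splits Rep_mon)
  also have "\<dots> = (\<Sum>ab\<in>splits w. if ab = (u,v) then 1 else 0)"
    by (intro sum.cong) (auto split: if_splits)
  also have "\<dots> = (if (u,v) \<in> splits w then 1 else 0)"
    by (rule sum.delta[OF finite_splits])
  also have "\<dots> = (if u @ v = w then 1 else 0)"
    by (simp add: splits_def)
  finally show "Rep_nc (mon (u @ v)) w = Rep_nc (mon u * mon v) w"
    by (auto simp: Rep_mon)
qed

lemma mon_single: "mon [i] = X i"
  by (rule nc_eqI) (simp add: Rep_mon Rep_X pvar_def)

lemma mon_Cons: "mon (i # w) = X i * mon w"
  using mon_append[of "[i]" w] by (simp add: mon_single)

definition supp :: "'k::field nc \<Rightarrow> nat list set" where "supp p = {w. Rep_nc p w \<noteq> 0}"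
definition fin :: "'k::field nc \<Rightarrow> bool" where "fin p \<longleftrightarrow> finite (supp p)"

lemma expand_gen:
  assumes "finite A" "supp p \<subseteq> A"
  shows "p = (\<Sum>w\<in>A. sc (Rep_nc p w) * mon w)"
proof (rule nc_eqI)
  fix v
  have "(\<Sum>w\<in>A. Rep_nc (sc (Rep_nc p w) * mon w) v) = (\<Sum>w\<in>A. if w = v then Rep_nc p v else 0)"
    by (intro sum.cong) (auto simp: Rep_mon)
  also have "\<dots> = Rep_nc p v" using assms by (auto simp: supp_def)
  finally show "Rep_nc p v = Rep_nc (\<Sum>w\<in>A. sc (Rep_nc p w) * mon w) v"
    by (simp add: Rep_sum)
qed

lemma expand: "fin p \<Longrightarrow> p = (\<Sum>w\<in>supp p. sc (Rep_nc p w) * mon w)"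
  using expand_gen fin_def by blast

lemma fin_0[simp]: "fin 0" by (simp add: fin_def supp_def)
lemma fin_add: "fin p \<Longrightarrow> fin q \<Longrightarrow> fin (p + q)"
  unfolding fin_def supp_def by (rule finite_subset[of _ "{w. Rep_nc p w \<noteq> 0} \<union> {w. Rep_nc q w \<noteq> 0}"]) auto
lemma fin_uminus: "fin p \<Longrightarrow> fin (- p)" unfolding fin_def supp_def by simp
lemma fin_diff: "fin p \<Longrightarrow> fin q \<Longrightarrow> fin (p - q)"
  by (metis diff_conv_add_uminus fin_add fin_uminus)
lemma fin_sc_mult: "fin p \<Longrightarrow> fin (sc c * p)"
  unfolding fin_def supp_def by (rule finite_subset[of _ "{w. Rep_nc p w \<noteq> 0}"]) auto
lemma fin_mon: "fin (mon w)"
  unfolding fin_def supp_def by (rule finite_subset[of _ "{w}"]) (auto simp: Rep_mon)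
lemma fin_sum: "(\<And>x. x \<in> A \<Longrightarrow> fin (f x)) \<Longrightarrow> fin (sum f A)"
  by (induction A rule: infinite_finite_induct) (auto intro: fin_add)
lemma fin_sc: "fin (sc c)" using fin_sc_mult[OF fin_mon, of c "[]"] by (simp add: mon_Nil)
lemma fin_1: "fin 1" using fin_mon[of "[]"] by (simp add: mon_Nil)
lemma fin_X: "fin (X i)" using fin_mon[of "[i]"] by (simp add: mon_single)
lemma fin_mult: assumes "fin p" "fin q" shows "fin (p * q)"
proof -
  have "supp (p * q) \<subseteq> (\<lambda>(u,v). u @ v) ` (supp p \<times> supp q)"
  proof
    fix w assume "w \<in> supp (p * q)"
    then have "(\<Sum>(u,v)\<in>splits w. Rep_nc p u * Rep_nc q v) \<noteq> 0"
      by (simp add: supp_def Rep_times pmul_splits)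
    then obtain u v where "(u,v) \<in> splits w" "Rep_nc p u * Rep_nc q v \<noteq> 0"
      by (metis (no_types, lifting) case_prod_conv sum.neutral surj_pair)
    then show "w \<in> (\<lambda>(u,v). u @ v) ` (supp p \<times> supp q)"
      by (auto simp: supp_def splits_def intro!: image_eqI[of _ _ "(u,v)"])
  qed
  then show ?thesis using assms unfolding fin_def by (meson finite_SigmaI finite_imageI finite_subset)
qed

lemma fin_Rep: "fin p \<longleftrightarrow> finite {w. Rep_nc p w \<noteq> 0}" by (simp add: fin_def supp_def)

definition ev :: "(nat \<Rightarrow> 'k::field nc) \<Rightarrow> nat list \<Rightarrow> 'k nc" where
  "ev \<sigma> w = foldr (\<lambda>i acc. \<sigma> i * acc) w 1"

lemma ev_Nil[simp]: "ev \<sigma> [] = 1" by (simp add: ev_def)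
lemma ev_Cons[simp]: "ev \<sigma> (i # w) = \<sigma> i * ev \<sigma> w" by (simp add: ev_def)
lemma ev_append: "ev \<sigma> (u @ v) = ev \<sigma> u * ev \<sigma> v"
  by (induction u) (auto simp: mult.assoc)
lemma fin_ev: "(\<And>i. i \<in> set w \<Longrightarrow> fin (\<sigma> i)) \<Longrightarrow> fin (ev \<sigma> w)"
  by (induction w) (auto intro: fin_mult fin_1)
lemma ev_X: "ev X w = mon w" by (induction w) (auto simp: mon_Nil mon_Cons)

definition tsub :: "(nat \<Rightarrow> 'k::field nc) \<Rightarrow> 'k nc \<Rightarrow> 'k nc" where
  "tsub \<sigma> p = (\<Sum>w\<in>supp p. sc (Rep_nc p w) * ev \<sigma> w)"

lemma eval_word_bridge: "eval_word \<sigma> w = Rep_nc (ev (\<lambda>i. Abs_nc (\<sigma> i)) w)"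
  by (induction w) (auto simp: eval_word_def Rep_times Abs_nc_inverse)

lemma subst_bridge: "subst \<sigma> p = Rep_nc (tsub (\<lambda>i. Abs_nc (\<sigma> i)) (Abs_nc p))"
  unfolding subst_def tsub_def
  by (auto simp: Rep_sum supp_def Abs_nc_inverse eval_word_bridge)

lemma tsub_gen:
  assumes "finite A" "supp p \<subseteq> A"
  shows "tsub \<sigma> p = (\<Sum>w\<in>A. sc (Rep_nc p w) * ev \<sigma> w)"
  unfolding tsub_def using assms
  by (intro sum.mono_neutral_left) (auto simp: supp_def)

lemma tsub_add: assumes "fin p" "fin q" shows "tsub \<sigma> (p + q) = tsub \<sigma> p + tsub \<sigma> q"
proof -
  let ?A = "supp p \<union> supp q"
  have f: "finite ?A" using assms by (simp add: fin_def)
  have s: "supp (p+q) \<subseteq> ?A" by (auto simp: supp_def)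
  have "tsub \<sigma> (p + q) = (\<Sum>w\<in>?A. sc (Rep_nc (p+q) w) * ev \<sigma> w)" by (rule tsub_gen[OF f s])
  also have "\<dots> = (\<Sum>w\<in>?A. sc (Rep_nc p w) * ev \<sigma> w + sc (Rep_nc q w) * ev \<sigma> w)"
    by (intro sum.cong) (auto simp: sc_add distrib_right)
  also have "\<dots> = (\<Sum>w\<in>?A. sc (Rep_nc p w) * ev \<sigma> w) + (\<Sum>w\<in>?A. sc (Rep_nc q w) * ev \<sigma> w)"
    by (rule sum.distrib)
  also have "\<dots> = tsub \<sigma> p + tsub \<sigma> q"
    using tsub_gen[OF f, of p] tsub_gen[OF f, of q] by (auto simp: supp_def)
  finally show ?thesis .
qed

lemma tsub_sc_mult: "tsub \<sigma> (sc c * p) = sc c * tsub \<sigma> p"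
proof (cases "fin p")
  case True
  have f: "finite (supp p)" using True by (simp add: fin_def)
  have s: "supp (sc c * p) \<subseteq> supp p" by (auto simp: supp_def)
  have "tsub \<sigma> (sc c * p) = (\<Sum>w\<in>supp p. sc (Rep_nc (sc c * p) w) * ev \<sigma> w)"
    by (rule tsub_gen[OF f s])
  also have "\<dots> = (\<Sum>w\<in>supp p. sc c * (sc (Rep_nc p w) * ev \<sigma> w))"
    by (intro sum.cong) (auto simp: sc_mult mult.assoc)
  also have "\<dots> = sc c * tsub \<sigma> p" by (simp add: tsub_def sum_distrib_left)
  finally show ?thesis .
next
  case False
  show ?thesis
  proof (cases "c = 0")
    case True then show ?thesis by (simp add: tsub_def supp_def)
  next
    case False
    have "supp (sc c * p) = supp p" using False by (auto simp: supp_def)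
    then show ?thesis using \<open>\<not> fin p\<close> by (simp add: tsub_def fin_def)
  qed
qed

lemma tsub_0[simp]: "tsub \<sigma> 0 = 0" by (simp add: tsub_def supp_def)

lemma tsub_uminus: "tsub \<sigma> (- p) = - tsub \<sigma> p"
  using tsub_sc_mult[of \<sigma> "-1" p] by (simp add: sc_uminus)

lemma tsub_diff: "fin p \<Longrightarrow> fin q \<Longrightarrow> tsub \<sigma> (p - q) = tsub \<sigma> p - tsub \<sigma> q"
  by (metis tsub_add[of p "-q"] fin_uminus tsub_uminus diff_conv_add_uminus)

lemma tsub_sum: "(\<And>x. x \<in> A \<Longrightarrow> fin (f x)) \<Longrightarrow> tsub \<sigma> (sum f A) = (\<Sum>x\<in>A. tsub \<sigma> (f x))"
proof (induction A rule: infinite_finite_induct)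
  case (insert x F)
  then show ?case by (simp add: tsub_add fin_sum)
qed auto

lemma tsub_mon: "tsub \<sigma> (mon w) = ev \<sigma> w"
proof -
  have "tsub \<sigma> (mon w) = (\<Sum>v\<in>{w}. sc (Rep_nc (mon w) v) * ev \<sigma> v)"
    by (rule tsub_gen) (auto simp: supp_def Rep_mon)
  then show ?thesis by (simp add: Rep_mon)
qed

lemma tsub_1[simp]: "tsub \<sigma> 1 = 1" using tsub_mon[of \<sigma> "[]"] by (simp add: mon_Nil)
lemma tsub_X[simp]: "tsub \<sigma> (X i) = \<sigma> i" using tsub_mon[of \<sigma> "[i]"] by (simp add: mon_single)
lemma tsub_sc[simp]: "tsub \<sigma> (sc c) = sc c" using tsub_sc_mult[of \<sigma> c 1] by simp

lemma tsub_expand: "fin p \<Longrightarrow> tsub \<sigma> p = (\<Sum>w\<in>supp p. sc (Rep_nc p w) * ev \<sigma> w)"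
  by (simp add: tsub_def)

lemma sc_swap: "sc a * m * (sc b * n) = sc (a*b) * (m*n)"
proof -
  have "m * (sc b * n) = sc b * (m * n)" by (metis mult.assoc sc_comm)
  then show ?thesis by (simp add: sc_mult mult.assoc)
qed

lemma prod_sums: "(\<Sum>u\<in>A. sc (f u) * m u) * (\<Sum>v\<in>B. sc (g v) * n v) = (\<Sum>u\<in>A. \<Sum>v\<in>B. sc (f u * g v) * (m u * n v))"
  by (simp add: sum_product sc_swap)

lemma tsub_mult: assumes "fin p" "fin q" shows "tsub \<sigma> (p * q) = tsub \<sigma> p * tsub \<sigma> q"
proof -
  have "p * q = (\<Sum>u\<in>supp p. sc (Rep_nc p u) * mon u) * (\<Sum>v\<in>supp q. sc (Rep_nc q v) * mon v)"
    using expand assms by metis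
  also have "\<dots> = (\<Sum>u\<in>supp p. \<Sum>v\<in>supp q. sc (Rep_nc p u * Rep_nc q v) * mon (u @ v))"
    by (simp add: prod_sums mon_append)
  finally have e: "p * q = \<dots>" .
  have "tsub \<sigma> (p * q) = (\<Sum>u\<in>supp p. \<Sum>v\<in>supp q. tsub \<sigma> (sc (Rep_nc p u * Rep_nc q v) * mon (u @ v)))"
    unfolding e by (simp add: tsub_sum fin_sum fin_sc_mult fin_mon)
  also have "\<dots> = (\<Sum>u\<in>supp p. \<Sum>v\<in>supp q. sc (Rep_nc p u * Rep_nc q v) * (ev \<sigma> u * ev \<sigma> v))"
    by (simp add: tsub_sc_mult tsub_mon ev_append)
  also have "\<dots> = tsub \<sigma> p * tsub \<sigma> q"
    by (simp add: tsub_def prod_sums)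
  finally show ?thesis .
qed

definition finsub :: "(nat \<Rightarrow> 'k::field nc) \<Rightarrow> bool" where "finsub \<sigma> \<longleftrightarrow> (\<forall>i. fin (\<sigma> i))"

lemma fin_tsub: "finsub \<sigma> \<Longrightarrow> fin (tsub \<sigma> p)"
  unfolding tsub_def finsub_def by (intro fin_sum fin_sc_mult fin_ev) auto

lemma tsub_ev: assumes "finsub \<tau>" shows "tsub \<sigma> (ev \<tau> w) = ev (\<lambda>i. tsub \<sigma> (\<tau> i)) w"
proof (induction w)
  case Nil then show ?case by simp
next
  case (Cons i w)
  have "fin (\<tau> i)" using assms by (simp add: finsub_def)
  moreover have "fin (ev \<tau> w)" using assms by (intro fin_ev) (simp add: finsub_def)
  ultimately show ?case using Cons by (simp add: tsub_mult)
qed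

lemma tsub_comp:
  assumes "finsub \<tau>" "fin p"
  shows "tsub \<sigma> (tsub \<tau> p) = tsub (\<lambda>i. tsub \<sigma> (\<tau> i)) p"
proof -
  have "tsub \<sigma> (tsub \<tau> p) = (\<Sum>w\<in>supp p. tsub \<sigma> (sc (Rep_nc p w) * ev \<tau> w))"
    unfolding tsub_def[of \<tau>]
    by (rule tsub_sum) (metis assms(1) fin_ev fin_sc_mult finsub_def)
  also have "\<dots> = tsub (\<lambda>i. tsub \<sigma> (\<tau> i)) p"
    unfolding tsub_def[of "\<lambda>i. tsub \<sigma> (\<tau> i)"] using assms
    by (intro sum.cong) (auto simp: tsub_sc_mult tsub_ev)
  finally show ?thesis .
qed

lemma tsub_id: assumes "fin p" shows "tsub X p = p"
proof -
  have "tsub X p = (\<Sum>w\<in>supp p. sc (Rep_nc p w) * mon w)" by (simp add: tsub_def ev_X)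
  also have "\<dots> = p" by (rule expand[OF assms, symmetric])
  finally show ?thesis .
qed


definition iv :: "nat set \<Rightarrow> 'k::field nc \<Rightarrow> bool" where "iv V p \<longleftrightarrow> in_vars V (Rep_nc p)"

lemma iv_def2: "iv V p \<longleftrightarrow> fin p \<and> (\<forall>w\<in>supp p. set w \<subseteq> V)"
  by (auto simp: iv_def in_vars_def fin_def supp_def)

lemma iv_fin: "iv V p \<Longrightarrow> fin p" by (simp add: iv_def2)

lemma iv_0[simp]: "iv V 0" by (simp add: iv_def2 supp_def)
lemma iv_pt: "iv V p \<Longrightarrow> Rep_nc p w \<noteq> 0 \<Longrightarrow> set w \<subseteq> V" by (auto simp: iv_def2 supp_def)
lemma iv_I: "fin p \<Longrightarrow> (\<And>w. Rep_nc p w \<noteq> 0 \<Longrightarrow> set w \<subseteq> V) \<Longrightarrow> iv V p" by (auto simp: iv_def2 supp_def)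
lemma iv_add: assumes "iv V p" "iv V q" shows "iv V (p + q)"
proof (rule iv_I)
  show "fin (p + q)" using assms by (simp add: iv_fin fin_add)
  fix w assume "Rep_nc (p + q) w \<noteq> 0"
  then have "Rep_nc p w \<noteq> 0 \<or> Rep_nc q w \<noteq> 0" by auto
  then show "set w \<subseteq> V" using assms iv_pt by blast
qed
lemma iv_uminus: "iv V p \<Longrightarrow> iv V (- p)"
  by (auto simp: iv_def2 fin_uminus supp_def)
lemma iv_diff: "iv V p \<Longrightarrow> iv V q \<Longrightarrow> iv V (p - q)"
  by (metis diff_conv_add_uminus iv_add iv_uminus)
lemma iv_sc_mult: "iv V p \<Longrightarrow> iv V (sc c * p)"
  by (auto simp: iv_def2 fin_sc_mult supp_def)
lemma iv_mon: "set w \<subseteq> V \<Longrightarrow> iv V (mon w)"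
  by (auto simp: iv_def2 fin_mon supp_def Rep_mon)
lemma iv_sum: "(\<And>x. x \<in> A \<Longrightarrow> iv V (f x)) \<Longrightarrow> iv V (sum f A)"
  by (induction A rule: infinite_finite_induct) (auto intro: iv_add)
lemma iv_sc: "iv V (sc c)" using iv_sc_mult[OF iv_mon, of "[]" V c] by (simp add: mon_Nil)
lemma iv_1: "iv V 1" using iv_mon[of "[]" V] by (simp add: mon_Nil)
lemma iv_X: "i \<in> V \<Longrightarrow> iv V (X i)" using iv_mon[of "[i]" V] by (simp add: mon_single)
lemma iv_mono: "iv V p \<Longrightarrow> V \<subseteq> W \<Longrightarrow> iv W p" by (auto simp: iv_def2)

lemma iv_mult: assumes "iv V p" "iv V q" shows "iv V (p * q)"
proof -
  have "p * q = (\<Sum>u\<in>supp p. sc (Rep_nc p u) * mon u) * (\<Sum>v\<in>supp q. sc (Rep_nc q v) * mon v)"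
    using expand assms iv_fin by metis
  also have "\<dots> = (\<Sum>u\<in>supp p. \<Sum>v\<in>supp q. sc (Rep_nc p u * Rep_nc q v) * mon (u @ v))"
    by (simp add: prod_sums mon_append)
  finally have e: "p * q = \<dots>" .
  show ?thesis unfolding e using assms
    by (intro iv_sum iv_sc_mult iv_mon) (auto simp: iv_def2)
qed

lemma iv_power: "iv V p \<Longrightarrow> iv V (p ^ n)"
  by (induction n) (auto intro: iv_mult iv_1)

lemma iv_ev: "(\<And>i. i \<in> set w \<Longrightarrow> iv V (\<sigma> i)) \<Longrightarrow> iv V (ev \<sigma> w)"
  by (induction w) (auto intro: iv_mult iv_1)

lemma iv_tsub: assumes "iv V p" "\<And>i. i \<in> V \<Longrightarrow> iv W (\<sigma> i)" shows "iv W (tsub \<sigma> p)"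
  unfolding tsub_def using assms
  by (intro iv_sum iv_sc_mult iv_ev) (auto simp: iv_def2)

lemma ev_agree: "(\<And>i. i \<in> set w \<Longrightarrow> \<sigma> i = \<tau> i) \<Longrightarrow> ev \<sigma> w = ev \<tau> w"
  by (induction w) auto

lemma tsub_agree: assumes "iv V p" "\<And>i. i \<in> V \<Longrightarrow> \<sigma> i = \<tau> i" shows "tsub \<sigma> p = tsub \<tau> p"
  unfolding tsub_def using assms
  by (intro sum.cong refl arg_cong2[where f="(*)"] ev_agree) (auto simp: iv_def2)

lemma tsub_idV: assumes "iv V p" "\<And>i. i \<in> V \<Longrightarrow> \<sigma> i = X i" shows "tsub \<sigma> p = p"
  using tsub_agree[OF assms] tsub_id[OF iv_fin[OF assms(1)]] by simp

lemma tsub_const: "iv {} p \<Longrightarrow> tsub \<sigma> p = p"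
  by (rule tsub_idV) auto

lemma iv_empty: "iv {} p \<Longrightarrow> \<exists>c. p = sc c"
proof -
  assume a: "iv {} p"
  have "p = sc (Rep_nc p [])"
  proof (rule nc_eqI)
    fix w show "Rep_nc p w = Rep_nc (sc (Rep_nc p [])) w"
      using a by (cases w) (auto simp: iv_def2 supp_def Rep_sc pconst_def)
  qed
  then show ?thesis by blast
qed

lemma finsubI: "(\<And>i. fin (\<sigma> i)) \<Longrightarrow> finsub \<sigma>" by (simp add: finsub_def)

type_synonym 'k trip = "'k nc \<times> 'k nc \<times> 'k nc"

definition R3 :: "'k::field trip \<Rightarrow> 'k ncpoly \<times> 'k ncpoly \<times> 'k ncpoly" where
  "R3 x = (case x of (a,b,c) \<Rightarrow> (Rep_nc a, Rep_nc b, Rep_nc c))"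

lemma R3_simp[simp]: "R3 (a,b,c) = (Rep_nc a, Rep_nc b, Rep_nc c)" by (simp add: R3_def)

lemma R3_inj: "R3 x = R3 y \<longleftrightarrow> x = y"
  by (cases x; cases y) (auto simp: Rep_nc_inject)

lemma R3_surj: "\<exists>x. f = R3 x"
  by (cases f) (metis R3_simp Abs_nc_inverse UNIV_I)

definition trs :: "'k::field trip \<Rightarrow> nat \<Rightarrow> 'k nc" where
  "trs x i = (case x of (a,b,c) \<Rightarrow>
      if i = 1 then X 1 + a else if i = 2 then X 2 + b else if i = 3 then X 3 + c else X i)"

definition tmul :: "'k::field trip \<Rightarrow> 'k trip \<Rightarrow> 'k trip" where
  "tmul x y = (case y of (a,b,c) \<Rightarrow> (fst x + tsub (trs x) a, fst (snd x) + tsub (trs x) b,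
       snd (snd x) + tsub (trs x) c))"

lemma tmul_simp: "tmul (x1,x2,x3) (a,b,c) = (x1 + tsub (trs (x1,x2,x3)) a, x2 + tsub (trs (x1,x2,x3)) b,
       x3 + tsub (trs (x1,x2,x3)) c)" by (simp add: tmul_def)

lemma tri_bridge: "(\<lambda>i. Abs_nc (tri_subst (R3 x) i)) = trs x"
  by (cases x) (auto simp: tri_subst_def trs_def fun_eq_iff Rep_plus[symmetric] Rep_X[symmetric]
      Rep_nc_inverse)

lemma U3_mult_R3: "U3_mult (R3 x) (R3 y) = R3 (tmul x y)"
proof -
  obtain x1 x2 x3 where x: "x = (x1,x2,x3)" by (cases x)
  obtain y1 y2 y3 where y: "y = (y1,y2,y3)" by (cases y)
  have t: "\<And>p. subst (tri_subst (R3 x)) (Rep_nc p) = Rep_nc (tsub (trs x) p)"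
    by (simp add: subst_bridge tri_bridge Rep_nc_inverse)
  show ?thesis using t unfolding x y
    by (simp add: U3_mult_def tmul_simp Rep_plus)
qed

definition C3 :: "'k::field trip set" where
  "C3 = {(a,b,c). iv {2,3} a \<and> iv {3} b \<and> iv {} c}"

lemma U3_carrier: "carrier U3 = R3 ` C3"
proof -
  have "f \<in> R3 ` C3" if "f \<in> carrier U3" for f
  proof -
    obtain x where "f = R3 x" using R3_surj by blast
    then show ?thesis using that by (cases x) (auto simp: U3_def C3_def iv_def intro!: image_eqI)
  qed
  moreover have "R3 x \<in> carrier U3" if "x \<in> C3" for x
    using that by (cases x) (auto simp: U3_def C3_def iv_def)
  ultimately show ?thesis by blast
qed

lemma U3_one: "one U3 = R3 (0,0,0)" by (simp add: U3_def Rep_zero)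
lemma U3_mult: "monoid.mult U3 = U3_mult" by (simp add: U3_def)

lemma finsub_trs: "x \<in> C3 \<Longrightarrow> finsub (trs x)"
  by (cases x) (auto simp: finsub_def trs_def C3_def intro!: fin_add fin_X dest!: iv_fin)

lemma trs_iv23: "x \<in> C3 \<Longrightarrow> i \<in> {2,3} \<Longrightarrow> iv {2,3} (trs x i)"
  by (cases x) (auto simp: trs_def C3_def intro!: iv_add iv_X elim: iv_mono)

lemma trs_iv3: "x \<in> C3 \<Longrightarrow> i \<in> {3} \<Longrightarrow> iv {3} (trs x i)"
  by (cases x) (auto simp: trs_def C3_def intro!: iv_add iv_X elim: iv_mono)

lemma tmul_closed: assumes "x \<in> C3" "y \<in> C3" shows "tmul x y \<in> C3"
proof -
  obtain x1 x2 x3 where x: "x = (x1,x2,x3)" by (cases x)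
  obtain y1 y2 y3 where y: "y = (y1,y2,y3)" by (cases y)
  show ?thesis using assms trs_iv23[OF assms(1)] trs_iv3[OF assms(1)] unfolding x y
    by (auto simp: C3_def tmul_simp tsub_const intro!: iv_add iv_tsub)
qed

lemma trs_tmul: assumes "x \<in> C3" "y \<in> C3"
  shows "trs (tmul x y) = (\<lambda>i. tsub (trs x) (trs y i))"
proof -
  obtain x1 x2 x3 where x: "x = (x1,x2,x3)" by (cases x)
  obtain y1 y2 y3 where y: "y = (y1,y2,y3)" by (cases y)
  have f: "fin y1" "fin y2" "fin y3" using assms(2) by (auto simp: y C3_def iv_fin)
  show ?thesis unfolding x y
    by (auto simp: fun_eq_iff tmul_simp trs_def tsub_add f fin_X add.assoc)
qed

lemma tsub_tmul: assumes "x \<in> C3" "y \<in> C3" "fin p"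
  shows "tsub (trs (tmul x y)) p = tsub (trs x) (tsub (trs y) p)"
  by (simp add: trs_tmul[OF assms(1,2)] tsub_comp[OF finsub_trs[OF assms(2)] assms(3)])

lemma tmul_assoc: assumes "x \<in> C3" "y \<in> C3" "z \<in> C3"
  shows "tmul (tmul x y) z = tmul x (tmul y z)"
proof -
  obtain x1 x2 x3 where x: "x = (x1,x2,x3)" by (cases x)
  obtain y1 y2 y3 where y: "y = (y1,y2,y3)" by (cases y)
  obtain z1 z2 z3 where z: "z = (z1,z2,z3)" by (cases z)
  have fy: "fin y1" "fin y2" "fin y3" using assms(2) by (auto simp: y C3_def iv_fin)
  have fz: "fin z1" "fin z2" "fin z3" using assms(3) by (auto simp: z C3_def iv_fin)
  have ftz: "fin (tsub (trs (y1,y2,y3)) z1)" "fin (tsub (trs (y1,y2,y3)) z2)" "fin (tsub (trs (y1,y2,y3)) z3)"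
    using finsub_trs[OF assms(2)] unfolding y by (auto intro: fin_tsub)
  have e: "\<And>p. fin p \<Longrightarrow> tsub (trs (tmul x y)) p = tsub (trs x) (tsub (trs y) p)"
    using tsub_tmul[OF assms(1,2)] by blast
  show ?thesis
    using e[OF fz(1)] e[OF fz(2)] e[OF fz(3)]
    unfolding x y z
    by (simp add: tmul_simp tsub_add fy ftz add.assoc)
qed

lemma trs_0: "trs (0,0,0) = X" by (auto simp: trs_def fun_eq_iff)

lemma tmul_one_left: "x \<in> C3 \<Longrightarrow> tmul (0,0,0) x = x"
  by (cases x) (auto simp: tmul_simp trs_0 tsub_id C3_def iv_fin)

lemma tmul_one_right: "tmul x (0,0,0) = x"
  by (cases x) (auto simp: tmul_simp)

lemma zero_C3: "(0,0,0) \<in> C3" by (simp add: C3_def)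

definition kap :: "'k::field trip \<Rightarrow> nat \<Rightarrow> 'k nc" where
  "kap x = (case x of (x1,x2,x3) \<Rightarrow> trs (0, - tsub (trs (0,0,-x3)) x2, -x3))"

definition rinv :: "'k::field trip \<Rightarrow> 'k trip" where
  "rinv x = (case x of (x1,x2,x3) \<Rightarrow> (- tsub (kap x) x1, - tsub (kap x) x2, - tsub (kap x) x3))"

lemma rinv_props: assumes "x \<in> C3"
  shows "rinv x \<in> C3" "tmul x (rinv x) = (0,0,0)"
proof -
  obtain x1 x2 x3 where x: "x = (x1,x2,x3)" by (cases x)
  have a: "iv {2,3} x1" "iv {3} x2" "iv {} x3" using assms by (auto simp: x C3_def)
  define k2 where "k2 = - tsub (trs (0,0,-x3)) x2"
  have a3: "iv {3} x3" "iv {2,3} x3" using a(3) iv_mono by blast+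
  have k2: "iv {3} k2" unfolding k2_def
    by (intro iv_uminus iv_tsub[OF a(2)]) (auto simp: trs_def a3 intro!: iv_add iv_X iv_uminus iv_diff)
  have kx: "kap x = trs (0, k2, -x3)" by (simp add: kap_def x k2_def)
  have k23: "iv {2,3} (kap x i)" if "i \<in> {2,3}" for i
    using that k2 a a3 by (auto simp: kx trs_def intro!: iv_add iv_X iv_uminus iv_diff elim: iv_mono)
  have k3: "iv {3} (kap x i)" if "i \<in> {3}" for i
    using that k2 a a3 by (auto simp: kx trs_def intro!: iv_add iv_X iv_uminus iv_diff elim: iv_mono)
  show "rinv x \<in> C3"
    using a k23 k3 by (auto simp: rinv_def x C3_def tsub_const intro!: iv_uminus iv_tsub)
  have fx: "fin x1" "fin x2" "fin x3" using a iv_fin by auto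
  have x3c: "\<And>\<sigma>. tsub \<sigma> x3 = x3" using a(3) tsub_const by blast
  have c3: "tsub (trs x) (trs (0,0,-x3) i) = X i" if "i \<in> {3}" for i
    using that by (simp add: trs_def x tsub_add fin_X fin_uminus fx tsub_uminus x3c tsub_diff)
  have tx2: "tsub (trs x) (tsub (trs (0,0,-x3)) x2) = x2"
  proof -
    have "(0,0,-x3) \<in> C3" using a by (simp add: C3_def iv_uminus)
    then have "finsub (trs (0,0,-x3))" by (rule finsub_trs)
    then have "tsub (trs x) (tsub (trs (0,0,-x3)) x2) = tsub (\<lambda>i. tsub (trs x) (trs (0,0,-x3) i)) x2"
      using tsub_comp fx by blast
    also have "\<dots> = x2" by (rule tsub_idV[OF a(2)]) (use c3 in auto)
    finally show ?thesis .
  qed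
  have fk2: "fin k2" using iv_fin[OF k2] .
  have kap2: "kap x 2 = X 2 + k2" and kap3: "kap x 3 = X 3 - x3" by (simp_all add: kx trs_def)
  have trs2: "trs x 2 = X 2 + x2" and trs3: "trs x 3 = X 3 + x3" by (simp_all add: x trs_def)
  have tk2: "tsub (trs x) k2 = - x2" unfolding k2_def by (simp add: tsub_uminus tx2)
  have comp: "tsub (trs x) (kap x i) = X i" if "i \<in> {2,3}" for i
  proof -
    have "i = 2 \<or> i = 3" using that by auto
    then show ?thesis
    proof
      assume "i = 2" then show ?thesis
        by (simp add: kap2 tsub_add fin_X fk2 trs2 tk2)
    next
      assume "i = 3" then show ?thesis
        by (simp add: kap3 tsub_diff fin_X fx trs3 x3c)
    qed
  qed
  have id: "tsub (trs x) (tsub (kap x) p) = p" if "iv {2,3} p" for p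
  proof -
    have "finsub (kap x)" by (auto intro!: finsubI simp: kx trs_def fin_X fin_uminus fx fin_add fin_diff iv_fin[OF k2])
    then have "tsub (trs x) (tsub (kap x) p) = tsub (\<lambda>i. tsub (trs x) (kap x i)) p"
      using tsub_comp iv_fin[OF that] by blast
    also have "\<dots> = p" by (rule tsub_idV[OF that]) (use comp in auto)
    finally show ?thesis .
  qed
  have i2: "iv {2,3} x2" "iv {2,3} x3" using a by (auto elim: iv_mono)
  show "tmul x (rinv x) = (0,0,0)"
    using id[OF a(1)] id[OF i2(1)] id[OF i2(2)] unfolding x
    by (simp add: rinv_def tmul_simp tsub_uminus)
qed


lemma C3_ex: "f \<in> carrier U3 \<Longrightarrow> \<exists>x\<in>C3. f = R3 x"
  using U3_carrier by blast

lemma U3_monoid: "monoid (U3 :: ('k::field ncpoly \<times> 'k ncpoly \<times> 'k ncpoly) monoid)"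
proof
  fix f g h :: "'k ncpoly \<times> 'k ncpoly \<times> 'k ncpoly"
  assume f: "f \<in> carrier U3" and g: "g \<in> carrier U3"
  obtain x where x: "x \<in> C3" "f = R3 x" using C3_ex[OF f] by blast
  obtain y where y: "y \<in> C3" "g = R3 y" using C3_ex[OF g] by blast
  show "f \<otimes>\<^bsub>U3\<^esub> g \<in> carrier U3"
    using x y tmul_closed[OF x(1) y(1)] by (auto simp: U3_mult U3_mult_R3 U3_carrier)
  assume h: "h \<in> carrier U3"
  obtain z where z: "z \<in> C3" "h = R3 z" using C3_ex[OF h] by blast
  show "f \<otimes>\<^bsub>U3\<^esub> g \<otimes>\<^bsub>U3\<^esub> h = f \<otimes>\<^bsub>U3\<^esub> (g \<otimes>\<^bsub>U3\<^esub> h)"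
    using x y z by (simp add: U3_mult U3_mult_R3 tmul_assoc)
next
  show "\<one>\<^bsub>U3\<^esub> \<in> carrier U3" unfolding U3_one U3_carrier using zero_C3 by (rule imageI)
next
  fix f :: "'k ncpoly \<times> 'k ncpoly \<times> 'k ncpoly"
  assume f: "f \<in> carrier U3"
  obtain x where x: "x \<in> C3" "f = R3 x" using C3_ex[OF f] by blast
  show "\<one>\<^bsub>U3\<^esub> \<otimes>\<^bsub>U3\<^esub> f = f" using x by (simp add: U3_one U3_mult U3_mult_R3 tmul_one_left del: R3_simp)
  show "f \<otimes>\<^bsub>U3\<^esub> \<one>\<^bsub>U3\<^esub> = f" using x by (simp add: U3_one U3_mult U3_mult_R3 tmul_one_right del: R3_simp)
qed

lemma U3_group: "group (U3 :: ('k::field ncpoly \<times> 'k ncpoly \<times> 'k ncpoly) monoid)"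
proof -
  interpret monoid "U3 :: ('k::field ncpoly \<times> 'k ncpoly \<times> 'k ncpoly) monoid" by (rule U3_monoid)
  have rex: "\<exists>y\<in>carrier U3. f \<otimes>\<^bsub>U3\<^esub> y = \<one>\<^bsub>U3\<^esub>" if fU: "f \<in> carrier (U3 :: ('k::field ncpoly \<times> 'k ncpoly \<times> 'k ncpoly) monoid)" for f
  proof -
    obtain x :: "'k trip" where x: "x \<in> C3" "f = R3 x" using C3_ex[OF fU] by blast
    show ?thesis using rinv_props[OF x(1)] x
      by (intro bexI[of _ "R3 (rinv x)"]) (auto simp: U3_mult U3_mult_R3 U3_one U3_carrier simp del: R3_simp)
  qed
  show ?thesis
  proof (rule group_l_invI)
    fix f :: "'k ncpoly \<times> 'k ncpoly \<times> 'k ncpoly" assume f: "f \<in> carrier U3"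
    obtain g where g: "g \<in> carrier U3" "f \<otimes>\<^bsub>U3\<^esub> g = \<one>\<^bsub>U3\<^esub>" using rex[OF f] by blast
    obtain h where h: "h \<in> carrier U3" "g \<otimes>\<^bsub>U3\<^esub> h = \<one>\<^bsub>U3\<^esub>" using rex[OF g(1)] by blast
    have "f = f \<otimes>\<^bsub>U3\<^esub> (g \<otimes>\<^bsub>U3\<^esub> h)" using h f by simp
    also have "\<dots> = (f \<otimes>\<^bsub>U3\<^esub> g) \<otimes>\<^bsub>U3\<^esub> h" using m_assoc[OF f g(1) h(1)] by simp
    also have "\<dots> = h" using g h by simp
    finally have fh: "f = h" .
    have "g \<otimes>\<^bsub>U3\<^esub> f = \<one>\<^bsub>U3\<^esub>" using h(2) unfolding fh .
    then show "\<exists>y\<in>carrier U3. y \<otimes>\<^bsub>U3\<^esub> f = \<one>\<^bsub>U3\<^esub>" using g by blast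
  qed
qed

lemma (in group) comm_lemma:
  assumes x: "x \<in> carrier G" and y: "y \<in> carrier G" and t: "t \<in> carrier G"
    and e1: "y \<otimes> x = t \<otimes> (x \<otimes> y)" and e2: "t \<otimes> x = x \<otimes> t"
  shows "commutator G x (inv y) = t"
proof -
  have "commutator G x (inv y) = inv x \<otimes> (y \<otimes> x) \<otimes> inv y"
    using x y by (simp add: commutator_def m_assoc)
  also have "\<dots> = inv x \<otimes> (t \<otimes> x) \<otimes> (y \<otimes> inv y)"
    using x y t by (simp add: e1 m_assoc)
  also have "\<dots> = inv x \<otimes> (x \<otimes> t)" using x y t by (simp add: e2)
  also have "\<dots> = t" using x t by (simp flip: m_assoc)
  finally show ?thesis .
qed

lemma (in group) comm_alt:
  assumes x: "x \<in> carrier G" and y: "y \<in> carrier G"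
  shows "commutator G x y = inv (y \<otimes> x) \<otimes> (x \<otimes> y)"
proof -
  have "commutator G x y = ((inv x \<otimes> inv y) \<otimes> x) \<otimes> y" by (simp add: commutator_def)
  also have "\<dots> = (inv x \<otimes> inv y) \<otimes> (x \<otimes> y)" using x y by (simp add: m_assoc)
  also have "inv x \<otimes> inv y = inv (y \<otimes> x)" using x y by (simp add: inv_mult_group)
  finally show ?thesis .
qed

lemma (in group) comm_inv:
  assumes x: "x \<in> carrier G" and y: "y \<in> carrier G"
  shows "commutator G y x = inv (commutator G x y)"
proof -
  have "inv (commutator G x y) = inv (x \<otimes> y) \<otimes> (y \<otimes> x)"
    using x y by (simp add: comm_alt inv_mult_group)
  then show ?thesis using x y by (simp add: comm_alt)
qed

lemma (in group) comm_decomp: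
  assumes x: "x \<in> carrier G" and y: "y \<in> carrier G"
  shows "x \<otimes> y = y \<otimes> x \<otimes> commutator G x y"
proof -
  have yx: "y \<otimes> x \<in> carrier G" and xy: "x \<otimes> y \<in> carrier G" using x y by auto
  have "y \<otimes> x \<otimes> commutator G x y = (y \<otimes> x) \<otimes> (inv (y \<otimes> x) \<otimes> (x \<otimes> y))"
    using x y by (simp add: comm_alt)
  also have "\<dots> = ((y \<otimes> x) \<otimes> inv (y \<otimes> x)) \<otimes> (x \<otimes> y)"
    using yx xy by (simp only: m_assoc inv_closed)
  also have "\<dots> = x \<otimes> y" using yx xy by simp
  finally show ?thesis by simp
qed


declare R3_simp[simp del]

section \<open>Embedding K[t] into K<x_3>\<close>

definition emb :: "'k::field poly \<Rightarrow> 'k nc" where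
  "emb q = Abs_nc (\<lambda>w. if w = replicate (length w) 3 then coeff q (length w) else 0)"

lemma Rep_emb: "Rep_nc (emb q) w = (if w = replicate (length w) 3 then coeff q (length w) else 0)"
  by (simp add: emb_def Abs_nc_inverse)

lemma Rep_emb_rep: "Rep_nc (emb q) (replicate n 3) = coeff q n"
  by (simp add: Rep_emb)

lemma emb_inj: "emb p = emb q \<Longrightarrow> p = q"
  by (metis Rep_emb_rep poly_eqI)

lemma emb_add: "emb (p + q) = emb p + emb q" by (rule nc_eqI) (simp add: Rep_emb)
lemma emb_diff: "emb (p - q) = emb p - emb q" by (rule nc_eqI) (simp add: Rep_emb)
lemma emb_uminus: "emb (- p) = - emb p" by (rule nc_eqI) (simp add: Rep_emb)
lemma emb_smult: "emb (smult c p) = sc c * emb p" by (rule nc_eqI) (simp add: Rep_emb)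
lemma emb_0[simp]: "emb 0 = 0" by (rule nc_eqI) (simp add: Rep_emb)
lemma emb_const: "emb [:c:] = sc c"
  by (rule nc_eqI) (auto simp: Rep_emb Rep_sc pconst_def coeff_pCons split: nat.splits)

lemma Rep_X_mult: "Rep_nc (X i * p) w = (if w \<noteq> [] \<and> hd w = i then Rep_nc p (tl w) else 0)"
proof -
  have "Rep_nc (X i * p) w = (\<Sum>(u,v)\<in>splits w. (if u = [i] then 1 else 0) * Rep_nc p v)"
    by (simp add: Rep_times pmul_splits Rep_X pvar_def)
  also have "\<dots> = (\<Sum>uv\<in>splits w. if uv = ([i], tl w) then Rep_nc p (tl w) else 0)"
    by (intro sum.cong) (auto simp: splits_def split: if_splits)
  also have "\<dots> = (if ([i], tl w) \<in> splits w then Rep_nc p (tl w) else 0)"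
    by (rule sum.delta[OF finite_splits])
  also have "\<dots> = (if w \<noteq> [] \<and> hd w = i then Rep_nc p (tl w) else 0)"
    by (cases w) (auto simp: splits_def)
  finally show ?thesis .
qed

lemma emb_pCons0: "emb (pCons 0 q) = X 3 * emb q"
proof (rule nc_eqI)
  fix w
  show "Rep_nc (emb (pCons 0 q)) w = Rep_nc (X 3 * emb q) w"
  proof (cases w)
    case Nil then show ?thesis by (simp add: Rep_X_mult Rep_emb)
  next
    case (Cons i v) then show ?thesis by (auto simp: Rep_X_mult Rep_emb)
  qed
qed

lemma emb_pCons: "emb (pCons a q) = sc a + X 3 * emb q"
proof -
  have e: "pCons a q = [:a:] + pCons 0 q" by simp
  show ?thesis by (metis e emb_add emb_const emb_pCons0)
qed

lemma emb_X3_comm: "X 3 * emb q = emb q * X 3"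
proof (induction q)
  case 0 then show ?case by simp
next
  case (pCons a q)
  have "X 3 * (X 3 * emb q) = X 3 * emb q * X 3" by (metis mult.assoc pCons.IH)
  then show ?case by (simp add: emb_pCons distrib_left distrib_right sc_comm)
qed

lemma emb_mult: "emb (p * q) = emb p * emb q"
proof (induction p)
  case 0 then show ?case by simp
next
  case (pCons a p)
  show ?case by (simp add: emb_add emb_smult emb_pCons0 emb_pCons pCons.IH distrib_right mult.assoc)
qed

lemma emb_comm: "emb p * emb q = emb q * emb p"
  by (metis emb_mult mult.commute)

lemma emb_one: "emb 1 = 1" using emb_const[of 1] by (simp add: one_pCons)

lemma emb_X3: "emb [:0, 1:] = X 3"
  by (simp add: emb_pCons emb_const)

lemma emb_monom: "emb (monom 1 n) = X 3 ^ n"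
proof (induction n)
  case 0 then show ?case by (simp add: emb_one monom_0 one_pCons[symmetric])
next
  case (Suc n)
  have "monom (1::'a) (Suc n) = pCons 0 (monom 1 n)" by (simp add: monom_Suc)
  then show ?case by (simp add: emb_pCons0 Suc)
qed

lemma iv_emb: "iv {3} (emb q)"
proof (rule iv_I)
  have "supp (emb q) \<subseteq> (\<lambda>n. replicate n 3) ` {..degree q}"
    by (auto simp: supp_def Rep_emb le_degree intro!: image_eqI)
  then show "fin (emb q)" unfolding fin_def by (rule finite_subset) simp
next
  fix w assume "Rep_nc (emb q) w \<noteq> 0"
  then have "w = replicate (length w) 3" by (simp add: Rep_emb split: if_splits)
  then have "\<forall>x\<in>set w. x = 3" by (metis in_set_replicate)
  then show "set w \<subseteq> {3}" by auto
qed

lemma iv3_emb: assumes "iv {3} p" shows "\<exists>q. p = emb q"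
proof -
  have f: "finite (supp p)" using assms by (simp add: iv_def2 fin_def)
  define N where "N = Max (length ` supp p)"
  define q where "q = Abs_poly (\<lambda>n. Rep_nc p (replicate n 3))"
  have big: "Rep_nc p (replicate i 3) = 0" if "i > N" for i
  proof (rule ccontr)
    assume "Rep_nc p (replicate i 3) \<noteq> 0"
    then have "replicate i 3 \<in> supp p" by (simp add: supp_def)
    then have "i \<le> N" unfolding N_def using f by (metis Max_ge finite_imageI image_eqI length_replicate)
    then show False using that by simp
  qed
  have cq: "coeff q = (\<lambda>n. Rep_nc p (replicate n 3))" unfolding q_def by (rule coeff_Abs_poly) (use big in auto)
  have "p = emb q"
  proof (rule nc_eqI)
    fix w show "Rep_nc p w = Rep_nc (emb q) w"
    proof (cases "Rep_nc p w = 0")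
      case False
      then have "set w \<subseteq> {3}" using assms iv_pt by blast
      then have "\<forall>y\<in>set w. y = 3" by auto
      then have "w = replicate (length w) 3" by (metis replicate_length_same)
      then show ?thesis by (metis Rep_emb_rep cq)
    next
      case True
      then show ?thesis by (auto simp: Rep_emb cq)
    qed
  qed
  then show ?thesis by blast
qed

lemma tsub_emb: assumes "\<sigma> 3 = X 3 + sc h"
  shows "tsub \<sigma> (emb q) = emb (pcompose q [:h, 1:])"
proof (induction q)
  case 0 then show ?case by simp
next
  case (pCons a q)
  have "tsub \<sigma> (emb (pCons a q)) = sc a + (X 3 + sc h) * emb (pcompose q [:h, 1:])"
    by (simp add: emb_pCons tsub_add fin_sc fin_mult fin_X iv_fin[OF iv_emb] tsub_mult pCons.IH assms)
  also have "\<dots> = emb (pcompose (pCons a q) [:h, 1:])"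
    by (simp add: pcompose_pCons emb_add emb_mult emb_const emb_pCons emb_smult distrib_right add.commute)
  finally show ?case .
qed

section \<open>Finite differences of univariate polynomials\<close>

definition Dp :: "'k::field poly \<Rightarrow> 'k poly" where "Dp q = pcompose q [:1, 1:] - q"

lemma Dp_pCons: "Dp (pCons a q) = pcompose q [:1,1:] + pCons 0 (Dp q)"
  by (simp add: Dp_def pcompose_pCons algebra_simps)

lemma degree_pc: "degree (pcompose (q::'k::field poly) [:1,1:]) = degree q"
  by (simp add: degree_pcompose)

lemma lead_pc: "lead_coeff (pcompose (q::'k::field poly) [:1,1:]) = lead_coeff q"
  by (simp add: lead_coeff_comp)

lemma Dp_high: "k \<ge> degree q \<Longrightarrow> coeff (Dp (q::'k::field poly)) k = 0"
proof -
  assume k: "k \<ge> degree q"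
  show ?thesis
  proof (cases "k = degree q")
    case True
    then show ?thesis using lead_pc[of q] degree_pc[of q] by (simp add: Dp_def)
  next
    case False
    then have "k > degree q" using k by simp
    then show ?thesis using degree_pc[of q] by (simp add: Dp_def coeff_eq_0)
  qed
qed

lemma Dp_top: "degree q \<ge> 1 \<Longrightarrow> coeff (Dp (q::'k::field poly)) (degree q - 1) = of_nat (degree q) * lead_coeff q"
proof (induction q)
  case 0 then show ?case by simp
next
  case (pCons a q)
  have q0: "q \<noteq> 0" using pCons.prems by (auto)
  have dq: "degree (pCons a q) = Suc (degree q)" using q0 by (rule degree_pCons_eq)
  have c1: "coeff (pcompose q [:1,1:]) (degree q) = lead_coeff q" using lead_pc[of q] degree_pc[of q] by simp
  show ?case
  proof (cases "degree q = 0")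
    case True
    then show ?thesis using c1 dq q0 by (simp add: Dp_pCons)
  next
    case False
    then have "coeff (Dp q) (degree q - 1) = of_nat (degree q) * lead_coeff q" using pCons.IH by simp
    moreover have "coeff (pCons 0 (Dp q)) (degree q) = coeff (Dp q) (degree q - 1)"
      using False by (cases "degree q") auto
    ultimately show ?thesis using c1 dq q0 by (simp add: Dp_pCons algebra_simps)
  qed
qed

lemma Dp_degree: assumes "degree (q::'k::field_char_0 poly) = Suc d"
  shows "Dp q \<noteq> 0" "degree (Dp q) = d"
proof -
  have q0: "q \<noteq> 0" using assms by auto
  have c: "coeff (Dp q) d = of_nat (Suc d) * lead_coeff q" using Dp_top[of q] assms by simp
  have "of_nat (Suc d) \<noteq> (0::'k)" by (rule of_nat_neq_0)
  then have cn: "coeff (Dp q) d \<noteq> 0" using q0 c by (simp del: of_nat_Suc)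
  then show "Dp q \<noteq> 0" by auto
  have "degree (Dp q) \<le> d" by (rule degree_le) (auto intro!: Dp_high simp: assms)
  moreover have "d \<le> degree (Dp q)" using cn by (rule le_degree)
  ultimately show "degree (Dp q) = d" by simp
qed

lemma Dp_zero_const: assumes "Dp (q::'k::field_char_0 poly) = 0" shows "q = [:coeff q 0:]"
proof (cases "degree q")
  case 0 then show ?thesis by (simp add: degree_0_id)
next
  case (Suc d) then show ?thesis using Dp_degree(1)[OF Suc] assms by simp
qed


lemma cube_abs:
  fixes x s :: "'a::ring_1"
  assumes xs: "x * s = s * x"
  shows "x ^ 3 - (x - s) ^ 3 = (s*(x*x) + s*(x*x) + s*(x*x)) - (s*(s*x) + s*(s*x) + s*(s*x)) + s*(s*s)"
proof -
  have d1: "x*(x*s) = s*(x*x)" by (metis xs mult.assoc)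
  have d2: "x*(s*x) = s*(x*x)" by (metis xs mult.assoc)
  have d3: "x*(s*s) = s*(s*x)" by (metis xs mult.assoc)
  have d4: "s*(x*s) = s*(s*x)" by (metis xs mult.assoc)
  have d5: "x * s = s * x" by (rule xs)
  show ?thesis by (simp add: power3_eq_cube algebra_simps d1 d2 d3 d4 d5)
qed

lemma cube_id:
  fixes c :: "'k::field"
  shows "X 2 ^ 3 - (X 2 - sc c) ^ 3 = sc (3*c) * (X 2 * X 2) + X 2 * sc (-(3*c*c)) + 0 * X 2 + (sc (c*c*c) :: 'k nc)"
proof -
  let ?x = "X 2 :: 'k nc" and ?s = "sc c :: 'k nc"
  have xs: "?x * ?s = ?s * ?x" by (rule sc_comm[symmetric])
  have s3: "sc (3*c) = ?s + ?s + ?s" by (simp add: sc_add[symmetric] algebra_simps)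
  have e: "-(3*c*c) = -(c*c + c*c + c*c)" by (simp add: algebra_simps)
  have e2: "sc (-(3*c*c)) = - (?s*?s + ?s*?s + ?s*?s)" by (simp only: e sc_uminus sc_add sc_mult)
  have d3: "?x*(?s*?s) = ?s*(?s*?x)" by (metis xs mult.assoc)
  have s33: "X 2 * sc (-(3*c*c)) = - (?s*(?s*?x) + ?s*(?s*?x) + ?s*(?s*?x))"
    unfolding e2 by (simp add: algebra_simps d3)
  have sss: "sc (c*c*c) = ?s * (?s * ?s)" by (simp add: sc_mult mult.assoc)
  show ?thesis unfolding cube_abs[OF xs] s3 s33 sss by (simp add: algebra_simps)
qed

definition vsub :: "'k::field nc \<Rightarrow> 'k nc \<Rightarrow> nat \<Rightarrow> 'k nc" where
  "vsub G H i = (if i = 2 then X 2 + G else if i = 3 then X 3 + H else X i)"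

definition Sn :: "nat \<Rightarrow> 'k::field ncpoly set" where "Sn n = (S_step ^^ n) {pzero}"
definition Sw :: "'k::field ncpoly set" where "Sw = (\<Union>n. Sn n)"
definition Swm :: "nat \<Rightarrow> 'k::field ncpoly set" where "Swm m = (S_step ^^ m) Sw"
definition S2w :: "'k::field ncpoly set" where "S2w = (\<Union>m. Swm m)"

lemma Vact_bridge: "Vact (Rep_nc a) (Rep_nc G, Rep_nc H) = Rep_nc (tsub (vsub G H) a)"
proof -
  have "(\<lambda>i. Abs_nc (V_subst (Rep_nc G, Rep_nc H) i)) = vsub G H"
    by (auto simp: fun_eq_iff V_subst_def vsub_def Rep_plus[symmetric] Rep_X[symmetric] Rep_nc_inverse)
  then show ?thesis by (simp add: Vact_def subst_bridge Rep_nc_inverse)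
qed

lemma Vset_iff: "(Rep_nc G, Rep_nc H) \<in> Vset \<longleftrightarrow> iv {3} G \<and> iv {} H"
  by (simp add: Vset_def iv_def)

lemma tsub_power: "fin p \<Longrightarrow> tsub \<sigma> (p ^ n) = tsub \<sigma> p ^ n"
proof (induction n)
  case (Suc n)
  have "fin (p ^ n)" by (induction n) (auto intro: fin_mult fin_1 Suc.prems)
  then show ?case using Suc by (simp add: tsub_mult)
qed simp

lemma S_elim: assumes "Rep_nc p \<in> S_step Y" "iv {3} G" "iv {} H"
  shows "Rep_nc (tsub (vsub G H) p - p) \<in> Y"
proof -
  have "(Rep_nc G, Rep_nc H) \<in> Vset" using assms by (simp add: Vset_iff)
  then have "psub (Vact (Rep_nc p) (Rep_nc G, Rep_nc H)) (Rep_nc p) \<in> Y" using assms(1) by (simp add: S_step_def)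
  then show ?thesis by (simp add: Vact_bridge Rep_minus)
qed

lemma Rep_eq_pzero: "Rep_nc p = pzero \<longleftrightarrow> p = 0"
  by (metis Rep_nc_inject Rep_zero)

lemma S_step_mono: "A \<subseteq> B \<Longrightarrow> S_step A \<subseteq> S_step B"
  unfolding S_step_def by blast

lemma pzero_S: assumes "pzero \<in> A" shows "pzero \<in> S_step A"
  unfolding S_step_def
proof (safe)
  show "in_vars {2,3} (pzero :: 'a ncpoly)" by (simp add: in_vars_def pzero_def)
  fix g h :: "'a ncpoly"
  have v: "Vact (Rep_nc (0::'a nc)) (Rep_nc (Abs_nc g), Rep_nc (Abs_nc h)) = Rep_nc 0"
    using Vact_bridge[of 0 "Abs_nc g" "Abs_nc h"] by simp
  then have "psub (Vact pzero (g, h)) pzero = pzero"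
    by (simp add: Rep_zero Abs_nc_inverse psub_def pzero_def)
  then show "psub (Vact pzero (g, h)) pzero \<in> A" using assms by simp
qed

lemma Sn_Suc: "Sn n \<subseteq> Sn (Suc n)"
proof (induction n)
  case 0 then show ?case by (simp add: Sn_def pzero_S)
next
  case (Suc n) then show ?case by (simp add: Sn_def S_step_mono)
qed

lemma Sn_mono: "m \<le> n \<Longrightarrow> Sn m \<subseteq> Sn n"
  by (rule lift_Suc_mono_le[of Sn]) (use Sn_Suc in auto)

lemma Sn_Suc_eq: "Sn (Suc n) = S_step (Sn n)" by (simp add: Sn_def)

lemma Sw_Suc: "Sw \<subseteq> S_step Sw"
proof
  fix x assume "x \<in> Sw"
  then obtain n where "x \<in> Sn n" by (auto simp: Sw_def)
  then have "x \<in> S_step (Sn n)" using Sn_Suc Sn_Suc_eq by blast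
  moreover have "Sn n \<subseteq> Sw" by (auto simp: Sw_def)
  ultimately show "x \<in> S_step Sw" using S_step_mono by blast
qed

lemma Swm_Suc_eq: "Swm (Suc m) = S_step (Swm m)" by (simp add: Swm_def)

lemma Swm_Suc: "Swm m \<subseteq> Swm (Suc m)"
proof (induction m)
  case 0 then show ?case by (simp add: Swm_def Sw_Suc)
next
  case (Suc m) then show ?case by (simp add: Swm_Suc_eq S_step_mono)
qed

lemma L_shift: "iv {3} (p :: 'k::field_char_0 nc) \<Longrightarrow> tsub (vsub 0 1) p = p \<Longrightarrow> \<exists>c. p = sc c"
proof -
  assume p: "iv {3} p" and e: "tsub (vsub 0 1) p = p"
  obtain q where q: "p = emb q" using iv3_emb[OF p] by blast
  have "tsub (vsub 0 1) (emb q) = emb (pcompose q [:1, 1:])"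
    by (rule tsub_emb) (simp add: vsub_def)
  then have "emb (pcompose q [:1,1:]) = emb q" using e q by simp
  then have "Dp q = 0" by (simp add: Dp_def emb_inj)
  then have "q = [:coeff q 0:]" by (rule Dp_zero_const)
  then show ?thesis using q emb_const by metis
qed

lemma vsub01: "vsub 0 1 3 = X 3 + sc 1" by (simp add: vsub_def)
lemmas tsub_emb01 = tsub_emb[where h=1 and \<sigma>="vsub 0 1", OF vsub01]

lemma NM0: "(q::'k::field_char_0 poly) \<noteq> 0 \<Longrightarrow> Rep_nc (emb q) \<notin> Sn (degree q)"
proof (induction "degree q" arbitrary: q)
  case 0
  have "emb q \<noteq> 0" using 0 emb_inj[of q 0] by auto
  then show ?case using 0 by (simp add: Sn_def Rep_eq_pzero)
next
  case (Suc d)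
  show ?case
  proof
    assume "Rep_nc (emb q) \<in> Sn (degree q)"
    then have "Rep_nc (emb q) \<in> S_step (Sn d)" using Suc.hyps(2) by (simp add: Sn_Suc_eq[symmetric])
    then have "Rep_nc (tsub (vsub 0 1) (emb q) - emb q) \<in> Sn d"
      by (rule S_elim) (simp_all add: iv_sc iv_1)
    moreover have "tsub (vsub 0 1) (emb q) - emb q = emb (Dp q)"
      by (simp add: tsub_emb01 Dp_def emb_diff)
    ultimately have "Rep_nc (emb (Dp q)) \<in> Sn d" by simp
    moreover have "Dp q \<noteq> 0" "degree (Dp q) = d" using Dp_degree Suc.hyps(2) by metis+
    ultimately show False using Suc.hyps(1) by metis
  qed
qed

lemma NM0': "(q::'k::field_char_0 poly) \<noteq> 0 \<Longrightarrow> n \<le> degree q \<Longrightarrow> Rep_nc (emb q) \<notin> Sn n"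
  using NM0 Sn_mono by blast

lemma emb_G: "X 3 ^ n = emb (monom 1 n)" by (simp add: emb_monom)

lemma NM1:
  fixes P Q R :: "'k::field_char_0 nc"
  assumes P: "iv {3} P" and Q: "iv {3} Q" and R: "iv {3} R" and pq: "P + Q = emb pq" "pq \<noteq> 0"
  shows "Rep_nc (X 2 * P + Q * X 2 + R) \<notin> Sw"
proof
  let ?F = "X 2 * P + Q * X 2 + R"
  assume "Rep_nc ?F \<in> Sw"
  then obtain n where "Rep_nc ?F \<in> Sn n" by (auto simp: Sw_def)
  then have "Rep_nc ?F \<in> S_step (Sn n)" using Sn_Suc Sn_Suc_eq by blast
  moreover define G :: "'k nc" where "G = emb (monom 1 n)"
  have G: "iv {3} G" by (simp add: G_def iv_emb)
  ultimately have m: "Rep_nc (tsub (vsub G 0) ?F - ?F) \<in> Sn n" by (intro S_elim) (simp_all)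
  have fP: "fin P" "fin Q" "fin R" using P Q R iv_fin by auto
  have id: "tsub (vsub G 0) T = T" if "iv {3} T" for T by (rule tsub_idV[OF that]) (simp add: vsub_def)
  have "tsub (vsub G 0) ?F = (X 2 + G) * P + Q * (X 2 + G) + R"
    by (simp add: tsub_add tsub_mult fin_add fin_mult fin_X fP id P Q R) (simp add: vsub_def)
  then have "tsub (vsub G 0) ?F - ?F = G * P + Q * G" by (simp add: algebra_simps)
  also have "G * P = P * G" using iv3_emb[OF P] G_def emb_comm by metis
  also have "P * G + Q * G = emb (pq * monom 1 n)" by (simp add: pq(1)[symmetric] emb_mult G_def distrib_right)
  finally have "Rep_nc (emb (pq * monom 1 n)) \<in> Sn n" using m by simp
  moreover have "pq * monom 1 n \<noteq> 0" using pq(2) by simp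
  moreover have "n \<le> degree (pq * monom 1 n)" using pq(2) by (simp add: degree_mult_eq degree_monom_eq)
  ultimately show False using NM0' by blast
qed

lemma NM2:
  fixes P Q R :: "'k::field_char_0 nc"
  assumes "iv {3} P" "iv {3} Q" "iv {3} R" "P + Q = emb pq" "pq \<noteq> 0"
  shows "Rep_nc (X 2 * P + Q * X 2 + R) \<notin> Swm (degree pq)"
  using assms
proof (induction "degree pq" arbitrary: pq P Q R)
  case 0
  then have sw: "Swm (degree pq) = Sw" by (simp add: Swm_def)
  show ?case unfolding sw using NM1 0 by blast
next
  case (Suc d)
  let ?F = "X 2 * P + Q * X 2 + R"
  let ?\<sigma> = "vsub 0 1 :: nat \<Rightarrow> 'k nc"
  show ?case
  proof
    assume "Rep_nc ?F \<in> Swm (degree pq)"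
    then have "Rep_nc ?F \<in> S_step (Swm d)" using Suc.hyps(2) by (simp add: Swm_Suc_eq[symmetric])
    then have m: "Rep_nc (tsub ?\<sigma> ?F - ?F) \<in> Swm d" by (rule S_elim) (simp_all add: iv_sc iv_1)
    have fP: "fin P" "fin Q" "fin R" using Suc.prems iv_fin by auto
    have s2: "?\<sigma> 2 = X 2" by (simp add: vsub_def)
    have dF: "tsub ?\<sigma> ?F - ?F = X 2 * (tsub ?\<sigma> P - P) + (tsub ?\<sigma> Q - Q) * X 2 + (tsub ?\<sigma> R - R)"
      by (simp add: tsub_add tsub_mult fin_add fin_mult fin_X fP s2 algebra_simps)
    have s3: "iv {3} (?\<sigma> 3)" by (simp add: vsub_def iv_add iv_X iv_1)
    have ivs: "iv {3} (tsub ?\<sigma> T - T)" if "iv {3} T" for T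
      by (rule iv_diff[OF iv_tsub[OF that] that]) (use s3 in auto)
    have "(tsub ?\<sigma> P - P) + (tsub ?\<sigma> Q - Q) = tsub ?\<sigma> (P + Q) - (P + Q)"
      by (simp add: tsub_add fP algebra_simps)
    also have "\<dots> = emb (Dp pq)" using Suc.prems(4) by (simp add: tsub_emb01 Dp_def emb_diff)
    finally have e: "(tsub ?\<sigma> P - P) + (tsub ?\<sigma> Q - Q) = emb (Dp pq)" .
    have "Dp pq \<noteq> 0" "degree (Dp pq) = d" using Dp_degree Suc.hyps(2) by metis+
    then show False using Suc.hyps(1)[OF _ ivs[OF Suc.prems(1)] ivs[OF Suc.prems(2)] ivs[OF Suc.prems(3)] e] m dF
      by auto
  qed
qed

lemma NM3:
  fixes P Q R :: "'k::field_char_0 nc"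
  assumes a: "a \<noteq> 0" and P: "iv {3} P" and Q: "iv {3} Q" and R: "iv {3} R"
  shows "Rep_nc (sc a * (X 2 * X 2) + X 2 * P + Q * X 2 + R) \<notin> S2w"
proof
  let ?F = "sc a * (X 2 * X 2) + X 2 * P + Q * X 2 + R"
  assume "Rep_nc ?F \<in> S2w"
  then obtain m where "Rep_nc ?F \<in> Swm m" by (auto simp: S2w_def)
  then have "Rep_nc ?F \<in> S_step (Swm m)" using Swm_Suc Swm_Suc_eq by blast
  moreover define G :: "'k nc" where "G = emb (monom 1 m)"
  have G: "iv {3} G" by (simp add: G_def iv_emb)
  ultimately have mm: "Rep_nc (tsub (vsub G 0) ?F - ?F) \<in> Swm m" by (intro S_elim) (simp_all)
  have fP: "fin P" "fin Q" "fin R" using P Q R iv_fin by auto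
  have id: "tsub (vsub G 0) T = T" if "iv {3} T" for T by (rule tsub_idV[OF that]) (simp add: vsub_def)
  have s2: "vsub G 0 2 = X 2 + G" by (simp add: vsub_def)
  have "tsub (vsub G 0) ?F = sc a * ((X 2 + G) * (X 2 + G)) + (X 2 + G) * P + Q * (X 2 + G) + R"
    by (simp add: tsub_add tsub_mult tsub_sc_mult fin_add fin_mult fin_X fin_sc_mult fP id P Q R s2)
  then have "tsub (vsub G 0) ?F - ?F = sc a * (X 2 * G) + sc a * (G * X 2) + (sc a * (G * G) + G * P + Q * G)"
    by (simp add: algebra_simps)
  also have "sc a * (X 2 * G) = X 2 * (sc a * G)" by (metis mult.assoc sc_comm)
  also have "sc a * (G * X 2) = (sc a * G) * X 2" by (simp add: mult.assoc)
  finally have e: "tsub (vsub G 0) ?F - ?F = X 2 * (sc a * G) + (sc a * G) * X 2 + (sc a * (G * G) + G * P + Q * G)" .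
  have i1: "iv {3} (sc a * G)" using G by (rule iv_sc_mult)
  have i2: "iv {3} (sc a * (G * G) + G * P + Q * G)" using G P Q by (intro iv_add iv_sc_mult iv_mult)
  have pq: "sc a * G + sc a * G = emb (smult (a + a) (monom 1 m))" by (simp only: G_def emb_smult sc_add distrib_right)
  have nz: "smult (a + a) (monom (1::'k) m) \<noteq> 0" using a by (simp add: smult_eq_0_iff)
  have dg: "degree (smult (a + a) (monom (1::'k) m)) = m" using nz by (simp add: degree_monom_eq)
  show False using NM2[OF i1 i1 i2 pq nz] mm e dg by simp
qed

lemma NM: "(c::'k::field_char_0) \<noteq> 0 \<Longrightarrow> Rep_nc (X 2 ^ 3 - (X 2 - sc c) ^ 3) \<notin> S2w"
proof -
  assume c: "c \<noteq> 0"
  have a: "3 * c \<noteq> 0" using c by simp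
  have "Rep_nc (sc (3*c) * (X 2 * X 2) + X 2 * sc (-(3*c*c)) + 0 * X 2 + sc (c*c*c)) \<notin> S2w"
    by (rule NM3[OF a]) (simp_all add: iv_sc)
  then show ?thesis unfolding cube_id .
qed


declare R3_simp[simp del]

lemma trs_vsub: "iv {2,3} a \<Longrightarrow> tsub (trs (m1,m2,m3)) a = tsub (vsub m2 m3) a"
  by (rule tsub_agree) (auto simp: trs_def vsub_def)

definition TT :: "'k::field ncpoly set \<Rightarrow> ('k ncpoly \<times> 'k ncpoly \<times> 'k ncpoly) set" where
  "TT A = {(f1, pzero, pzero) | f1. f1 \<in> A}"

lemma TT_R3: "R3 (a,0,0) \<in> TT A \<longleftrightarrow> Rep_nc a \<in> A"
  by (auto simp: TT_def Rep_zero R3_simp)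

lemma TT_elem: assumes "f \<in> TT A" "f \<in> carrier U3"
  shows "\<exists>a. iv {2,3} a \<and> f = R3 (a,0,0) \<and> Rep_nc a \<in> A"
proof -
  obtain x where x: "x \<in> C3" "f = R3 x" using C3_ex[OF assms(2)] by blast
  obtain x1 x2 x3 where xx: "x = (x1,x2,x3)" by (cases x)
  have "Rep_nc x2 = pzero" "Rep_nc x3 = pzero" "Rep_nc x1 \<in> A" using assms(1) x xx by (auto simp: TT_def R3_simp)
  then have "x2 = 0" "x3 = 0" by (metis Rep_nc_inject Rep_zero)+
  then show ?thesis using x xx \<open>Rep_nc x1 \<in> A\<close> by (auto simp: C3_def)
qed

lemma C3_a00: "iv {2,3} a \<Longrightarrow> (a,0,0) \<in> C3" by (simp add: C3_def)

lemma tmul_a00_left: assumes "iv {2,3} a" "y \<in> C3"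
  shows "tmul (a,0,0) y = (a + fst y, fst (snd y), snd (snd y))"
proof -
  obtain y1 y2 y3 where y: "y = (y1,y2,y3)" by (cases y)
  have i: "iv {2,3} y1" "iv {2,3} y2" "iv {2,3} y3" using assms(2) by (auto simp: y C3_def elim: iv_mono)
  have "tsub (trs (a,0,0)) p = p" if "iv {2,3} p" for p
    by (rule tsub_idV[OF that]) (auto simp: trs_def)
  then show ?thesis using i by (simp add: y tmul_simp)
qed

lemma tmul_a00_right: "tmul y (a,0,0) = (fst y + tsub (trs y) a, fst (snd y), snd (snd y))"
  by (cases y) (simp add: tmul_simp)

lemma U3m: "R3 x \<otimes>\<^bsub>U3\<^esub> R3 y = R3 (tmul x y)" by (simp add: U3_mult U3_mult_R3 del: R3_simp)

lemma R3_carrier: "x \<in> C3 \<Longrightarrow> R3 x \<in> carrier U3" by (simp add: U3_carrier del: R3_simp)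

lemma K1: fixes a :: "'k::field nc" assumes a: "iv {2,3} a" and m: "m \<in> C3"
  shows "commutator U3 (R3 (a,0,0)) (inv\<^bsub>U3\<^esub> (R3 m)) = R3 (tsub (trs m) a - a, 0, 0)"
proof -
  interpret group "U3 :: ('k ncpoly \<times> 'k ncpoly \<times> 'k ncpoly) monoid" by (rule U3_group)
  define d where "d = tsub (trs m) a - a"
  obtain m1 m2 m3 where mm: "m = (m1,m2,m3)" by (cases m)
  have mi: "iv {2,3} m1" "iv {3} m2" "iv {} m3" using m by (auto simp: mm C3_def)
  have d: "iv {2,3} d" unfolding d_def using a trs_iv23[OF m]
    by (intro iv_diff iv_tsub) auto
  have e1: "tmul m (a,0,0) = tmul (d,0,0) (tmul (a,0,0) m)"
  proof -
    have "tmul (a,0,0) m = (a + m1, m2, m3)" using tmul_a00_left[OF a m] by (simp add: mm)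
    moreover have "(a + m1, m2, m3) \<in> C3" using mi a by (simp add: C3_def iv_add)
    ultimately show ?thesis using tmul_a00_left[OF d, of "(a + m1, m2, m3)"] tmul_a00_right[of m a]
      by (simp add: mm d_def algebra_simps)
  qed
  have e2: "tmul (d,0,0) (a,0,0) = tmul (a,0,0) (d,0,0)"
    using tmul_a00_left[OF d C3_a00[OF a]] tmul_a00_left[OF a C3_a00[OF d]] by (simp add: add.commute)
  show ?thesis
    unfolding d_def[symmetric]
    by (rule comm_lemma) (use e1 e2 a d m in \<open>auto simp: U3m intro!: R3_carrier C3_a00\<close>)
qed

lemma inv_R3: fixes x :: "'k::field trip" assumes "x \<in> C3" "y \<in> C3" "tmul x y = (0,0,0)"
  shows "inv\<^bsub>U3\<^esub> (R3 x) = R3 y"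
proof -
  interpret group "U3 :: ('k ncpoly \<times> 'k ncpoly \<times> 'k ncpoly) monoid" by (rule U3_group)
  have "R3 x \<otimes>\<^bsub>U3\<^esub> R3 y = \<one>\<^bsub>U3\<^esub>" using assms(3) by (simp add: U3m U3_one del: R3_simp)
  then have "R3 y \<otimes>\<^bsub>U3\<^esub> R3 x = \<one>\<^bsub>U3\<^esub>" using inv_comm R3_carrier assms by blast
  then show ?thesis using inv_equality R3_carrier assms by blast
qed

lemma inv_a00: "iv {2,3} e \<Longrightarrow> inv\<^bsub>U3\<^esub> (R3 (e,0,0)) = R3 (-e,0,0)"
proof (rule inv_R3)
  assume e: "iv {2,3} e"
  have "tsub (trs (e,0,0)) (-e) = -e" by (rule tsub_idV[OF iv_uminus[OF e]]) (auto simp: trs_def)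
  then show "tmul (e,0,0) (-e,0,0) = (0,0,0)" by (simp add: tmul_simp)
qed (auto simp: C3_def iv_uminus)

lemma CSE: fixes a :: "'k::field nc" assumes a: "iv {2,3} a"
  shows "R3 (a,0,0) \<in> center_step U3 (TT A) \<longleftrightarrow> Rep_nc a \<in> S_step A"
proof -
  interpret group "U3 :: ('k ncpoly \<times> 'k ncpoly \<times> 'k ncpoly) monoid" by (rule U3_group)
  have car: "R3 (a,0,0) \<in> carrier U3" using a by (simp add: R3_carrier C3_a00 del: R3_simp)
  have key: "commutator U3 (R3 (a,0,0)) (inv\<^bsub>U3\<^esub> (R3 (m1,m2,m3))) \<in> TT A \<longleftrightarrow>
        psub (Vact (Rep_nc a) (Rep_nc m2, Rep_nc m3)) (Rep_nc a) \<in> A" if "(m1,m2,m3) \<in> C3" for m1 m2 m3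
    using K1[OF a that] by (simp add: TT_R3 Vact_bridge Rep_minus trs_vsub[OF a] del: R3_simp)
  show ?thesis
  proof
    assume L: "R3 (a,0,0) \<in> center_step U3 (TT A)"
    show "Rep_nc a \<in> S_step A" unfolding S_step_def
    proof (safe)
      show "in_vars {2,3} (Rep_nc a)" using a by (simp add: iv_def)
      fix g h :: "'k ncpoly" assume gh: "(g, h) \<in> Vset"
      define G H where "G = Abs_nc g" and "H = Abs_nc h"
      have gh': "g = Rep_nc G" "h = Rep_nc H" by (simp_all add: G_def H_def Abs_nc_inverse)
      have m: "(0,G,H) \<in> C3" using gh by (simp add: C3_def Vset_iff gh')
      have "inv\<^bsub>U3\<^esub> (R3 (0,G,H)) \<in> carrier U3" using R3_carrier[OF m] by (rule inv_closed)
      then have "commutator U3 (R3 (a,0,0)) (inv\<^bsub>U3\<^esub> (R3 (0,G,H))) \<in> TT A"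
        using L by (simp add: center_step_def del: R3_simp)
      then show "psub (Vact (Rep_nc a) (g, h)) (Rep_nc a) \<in> A" using key[OF m] by (simp add: gh')
    qed
  next
    assume R: "Rep_nc a \<in> S_step A"
    show "R3 (a,0,0) \<in> center_step U3 (TT A)" unfolding center_step_def
    proof (safe intro!: car)
      fix f :: "'k ncpoly \<times> 'k ncpoly \<times> 'k ncpoly" assume f: "f \<in> carrier U3"
      have "inv\<^bsub>U3\<^esub> f \<in> carrier U3" using f by (rule inv_closed)
      then obtain m where m: "m \<in> C3" "inv\<^bsub>U3\<^esub> f = R3 m" using C3_ex by blast
      obtain m1 m2 m3 where mm: "m = (m1,m2,m3)" by (cases m)
      have ff: "f = inv\<^bsub>U3\<^esub> (R3 m)" using m f by (metis inv_inv)
      have "(Rep_nc m2, Rep_nc m3) \<in> Vset" using m by (simp add: mm Vset_iff C3_def)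
      then have "psub (Vact (Rep_nc a) (Rep_nc m2, Rep_nc m3)) (Rep_nc a) \<in> A"
        using R by (simp add: S_step_def)
      then show "commutator U3 (R3 (a,0,0)) f \<in> TT A" using key m by (simp add: ff mm del: R3_simp)
    qed
  qed
qed


lemma (in group) commutator_closed: "x \<in> carrier G \<Longrightarrow> y \<in> carrier G \<Longrightarrow> commutator G x y \<in> carrier G"
  by (simp add: commutator_def)

lemma CSH:
  fixes f :: "'k::field_char_0 ncpoly \<times> 'k ncpoly \<times> 'k ncpoly"
  assumes f: "f \<in> center_step U3 (TT B)" and B: "B \<subseteq> S2w"
  shows "\<exists>a. iv {2,3} a \<and> f = R3 (a,0,0)"
proof -
  interpret group "U3 :: ('k ncpoly \<times> 'k ncpoly \<times> 'k ncpoly) monoid" by (rule U3_group)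
  have fc: "f \<in> carrier U3" and fcomm: "\<And>h. h \<in> carrier U3 \<Longrightarrow> commutator U3 f h \<in> TT B"
    using f by (auto simp: center_step_def)
  obtain x where x: "x \<in> C3" "f = R3 x" using C3_ex[OF fc] by blast
  obtain x1 x2 x3 where xx: "x = (x1,x2,x3)" by (cases x)
  have xi: "iv {2,3} x1" "iv {3} x2" "iv {} x3" using x(1) by (auto simp: xx C3_def)
  have x2': "iv {2,3} x2" using xi(2) iv_mono by blast
  have SND: "snd (tmul x y) = snd (tmul y x)" if y: "y \<in> C3" for y
  proof -
    have yc: "R3 y \<in> carrier U3" using y by (rule R3_carrier)
    have c: "commutator U3 f (R3 y) \<in> TT B" using fcomm[OF yc] .
    have cc: "commutator U3 f (R3 y) \<in> carrier U3" using commutator_closed[OF fc yc] .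
    obtain e where e: "iv {2,3} e" "commutator U3 f (R3 y) = R3 (e,0,0)" using TT_elem[OF c cc] by blast
    have "f \<otimes>\<^bsub>U3\<^esub> R3 y = R3 y \<otimes>\<^bsub>U3\<^esub> f \<otimes>\<^bsub>U3\<^esub> commutator U3 f (R3 y)"
      using comm_decomp[OF fc yc] .
    then have "R3 x \<otimes>\<^bsub>U3\<^esub> R3 y = R3 y \<otimes>\<^bsub>U3\<^esub> R3 x \<otimes>\<^bsub>U3\<^esub> R3 (e,0,0)"
      unfolding e(2) by (simp add: x(2))
    then have "R3 (tmul x y) = R3 (tmul (tmul y x) (e,0,0))" by (simp only: U3m)
    then have "tmul x y = tmul (tmul y x) (e,0,0)" by (simp add: R3_inj)
    then show ?thesis by (simp add: tmul_a00_right)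
  qed
  have X3i: "iv {3} (X 3 :: 'k nc)" by (rule iv_X) simp
  have y1: "(0::'k nc, X 3, 0) \<in> C3" using X3i by (simp add: C3_def)
  have "snd (tmul x (0, X 3, 0)) = snd (tmul (0, X 3, 0) x)" using SND[OF y1] .
  moreover have "tsub (trs (0, X 3, 0)) x2 = x2" by (rule tsub_idV[OF xi(2)]) (auto simp: trs_def)
  moreover have "tsub (trs x) (X 3) = X 3 + x3" by (simp add: xx trs_def)
  ultimately have "x2 + (X 3 + x3) = X 3 + x2" using tsub_const[OF xi(3)] by (simp add: xx tmul_simp)
  then have x3: "x3 = 0" by (simp add: algebra_simps)
  have y2: "(0::'k nc, 0, 1) \<in> C3" by (simp add: C3_def iv_1)
  have "snd (tmul x (0, 0, 1)) = snd (tmul (0, 0, 1) x)" using SND[OF y2] .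
  then have "x2 = tsub (trs (0,0,1)) x2" by (simp add: xx tmul_simp)
  also have "\<dots> = tsub (vsub 0 1) x2" by (rule trs_vsub[OF x2'])
  finally obtain c where c: "x2 = sc c" using L_shift[OF xi(2)] by metis
  show ?thesis
  proof (cases "c = 0")
    case True
    then show ?thesis using x xx x3 c xi by auto
  next
    case False
    define P :: "'k nc" where "P = X 2 ^ 3"
    have Pi: "iv {2,3} P" unfolding P_def by (intro iv_power iv_X) simp
    have y3: "(P, 0, 0) \<in> C3" using Pi by (rule C3_a00)
    have yc: "R3 (P,0,0) \<in> carrier U3" using y3 by (rule R3_carrier)
    have ri: "rinv x \<in> C3" "tmul x (rinv x) = (0,0,0)" using rinv_props[OF x(1)] by auto
    have invf: "inv\<^bsub>U3\<^esub> f = R3 (rinv x)" using inv_R3[OF x(1) ri(1) ri(2)] x(2) by simp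
    have ff: "f = inv\<^bsub>U3\<^esub> (R3 (rinv x))" using invf fc by (metis inv_inv)
    obtain r1 where rx: "rinv x = (r1, - sc c, 0)"
      using tsub_const[OF iv_sc[of "{}" c]] by (simp add: rinv_def xx c x3)
    have "tsub (trs (rinv x)) P = (X 2 - sc c) ^ 3"
      unfolding P_def by (simp add: tsub_power fin_X rx trs_def)
    then have K: "commutator U3 (R3 (P,0,0)) f = R3 ((X 2 - sc c) ^ 3 - P, 0, 0)"
      using K1[OF Pi ri(1)] ff by simp
    have di: "iv {2,3} ((X 2 - sc c) ^ 3 - P)"
      by (intro iv_diff iv_power Pi iv_X iv_sc) simp
    have "commutator U3 f (R3 (P,0,0)) = inv\<^bsub>U3\<^esub> (commutator U3 (R3 (P,0,0)) f)"
      using comm_inv[OF yc fc] .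
    also have "\<dots> = R3 (- ((X 2 - sc c) ^ 3 - P), 0, 0)" using K inv_a00[OF di] by simp
    finally have "R3 (P - (X 2 - sc c) ^ 3, 0, 0) \<in> TT B" using fcomm[OF yc] by simp
    then have "Rep_nc (X 2 ^ 3 - (X 2 - sc c) ^ 3) \<in> S2w" using B by (auto simp: TT_R3 P_def)
    then show ?thesis using NM[OF False] by blast
  qed
qed

lemma STEP:
  assumes B: "(B :: 'k::field_char_0 ncpoly set) \<subseteq> S2w"
  shows "center_step U3 (TT B) = TT (S_step B)"
proof
  show "center_step U3 (TT B) \<subseteq> TT (S_step B)"
  proof
    fix f assume f: "f \<in> center_step U3 (TT B)"
    obtain a :: "'k nc" where a: "iv {2,3} a" "f = R3 (a,0,0)" using CSH[OF f B] by blast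
    then have "Rep_nc a \<in> S_step B" using f CSE[OF a(1)] by simp
    then show "f \<in> TT (S_step B)" using a TT_R3 by metis
  qed
next
  show "TT (S_step B) \<subseteq> center_step U3 (TT B)"
  proof
    fix f assume f: "f \<in> TT (S_step B)"
    then obtain f1 where f1: "f = (f1, pzero, pzero)" "f1 \<in> S_step B" by (auto simp: TT_def)
    define a :: "'k nc" where "a = Abs_nc f1"
    have a: "iv {2,3} a" using f1 by (simp add: a_def iv_def S_step_def Abs_nc_inverse)
    have "f = R3 (a,0,0)" by (simp add: f1 a_def R3_simp Abs_nc_inverse Rep_zero)
    then show "f \<in> center_step U3 (TT B)" using CSE[OF a] f1 by (simp add: a_def Abs_nc_inverse)
  qed
qed

lemma ITER:
  assumes "\<And>k. (S_step ^^ k) (B :: 'k::field_char_0 ncpoly set) \<subseteq> S2w"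
  shows "(center_step U3 ^^ n) (TT B) = TT ((S_step ^^ n) B)"
  by (induction n) (auto simp: STEP assms)

lemma TT_Union: "(\<Union>n. TT (A n)) = TT (\<Union>n. A n)" by (auto simp: TT_def)

lemma one_TT: "{\<one>\<^bsub>U3\<^esub>} = TT {pzero}" by (simp add: U3_one TT_def R3_simp Rep_zero)

lemma Sn_sub: "(S_step ^^ k) {pzero} \<subseteq> (S2w :: 'k::field ncpoly set)"
proof
  fix x assume "x \<in> (S_step ^^ k) {pzero}"
  then have "x \<in> (S_step ^^ 0) Sw" by (auto simp: Sw_def Sn_def)
  then show "x \<in> S2w" unfolding S2w_def Swm_def by (rule UN_I[OF UNIV_I])
qed

lemma Swm_sub: "(S_step ^^ k) Sw \<subseteq> (S2w :: 'k::field ncpoly set)"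
  unfolding S2w_def Swm_def by auto

theorem theorem2:
  fixes \<alpha> :: ord_idx
  assumes "\<alpha> \<noteq> Fin 0"
  shows "hypercenter (U3 :: ('k::field_char_0 ncpoly \<times> 'k ncpoly \<times> 'k ncpoly) monoid) \<alpha>
           = {(f1, pzero, pzero) | f1. f1 \<in> (S_idx \<alpha> :: 'k ncpoly set)}"
proof -
  have fin: "(center_step (U3 :: ('k ncpoly \<times> 'k ncpoly \<times> 'k ncpoly) monoid) ^^ n) {\<one>\<^bsub>U3\<^esub>}
      = TT ((S_step ^^ n) {pzero})" for n
    unfolding one_TT by (rule ITER) (rule Sn_sub)
  have w: "(\<Union>n. (center_step (U3 :: ('k ncpoly \<times> 'k ncpoly \<times> 'k ncpoly) monoid) ^^ n) {\<one>\<^bsub>U3\<^esub>})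
      = TT Sw" by (simp add: fin TT_Union Sw_def Sn_def)
  have wm: "(center_step (U3 :: ('k ncpoly \<times> 'k ncpoly \<times> 'k ncpoly) monoid) ^^ m) (TT Sw)
      = TT ((S_step ^^ m) Sw)" for m
    by (rule ITER) (rule Swm_sub)
  show ?thesis
  proof (cases \<alpha>)
    case (Fin n) then show ?thesis by (simp add: hypercenter_def S_idx_def fin TT_def)
  next
    case (OmegaPlus m) then show ?thesis
      by (simp add: hypercenter_def S_idx_def w wm) (simp add: TT_def Sw_def Sn_def)
  next
    case TwoOmega then show ?thesis
      by (simp add: hypercenter_def S_idx_def w wm TT_Union) (simp add: TT_def Sw_def Sn_def)
  qed
qed


end
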